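(* Let $n,\ell,v$ be positive integers. For all $\kappa\in[0,1]$ and $\rho\ge0$ such that $t_1<t_2$, where $$t_1=\frac{1+\kappa}{2}+\frac v\ell+\rho,\qquad t_2=\frac{1+3\kappa}{2}-\frac{15\kappa^2}{4}-\frac{5\kappa}{\ell}-\rho,$$ a pair $(S,U)$ sampled from $\mathsf{Strong}_\kappa$ is a $(t_1,t_2,v)$-strong yes instance, except with probability at most $\ell^62^{-n}+2\ell^2\exp\!\left(-\frac{\rho^22^n}{2\ell^2}\right)$.
   Context: $\mathsf{Strong}_\kappa$: sample a multiset $S=\{s_1,\dots,s_\ell\}$ with each $s_i\in\{0,1\}^n$ independent uniform; let $\gamma_y^{(S)}=\frac1\ell\sum_{i,j\in[\ell]}(-1)^{y\cdot(s_i\oplus s_j)}$; include each $y\in\{0,1\}^n$ in the set $U$ independently with probability $1-\frac12e^{-\kappa\gamma_y^{(S)}}$. For sets $S,U\subseteq\{0,1\}^n$ (multisets treated as their underlying sets), with $\Pi_S=\sum_{x\in S}|x\rangle\langle x|$, $(S,U)$ is $\alpha$-spectrally Forrelated for $\alpha=\|\Pi_UH^{\otimes n}\Pi_S\|_{\mathrm{op}}^2$. A pair $(S,U)$ is a $(t_1,t_2,v)$-strong yes instance if $(S,U)$ is at least $t_2$-spectrally Forrelated (value $\ge t_2$) and for every subset $\Delta\subset S$ with $|\Delta|\le v$, $(\Delta,U)$ is at most $t_1$-spectrally Forrelated (value $\le t_1$). *)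

theory Defs
  imports "HOL-Probability.Probability"
begin

definition bitstrings :: "nat \<Rightarrow> bool list set" where
  "bitstrings n = {xs. length xs = n}"

text \<open>Inner product y . x over GF(2), as a natural number whose parity matters.\<close>
definition bdot :: "bool list \<Rightarrow> bool list \<Rightarrow> nat" where
  "bdot y x = card {i. i < length y \<and> i < length x \<and> y ! i \<and> x ! i}"

definition bxor :: "bool list \<Rightarrow> bool list \<Rightarrow> bool list" where
  "bxor x y = map2 (\<noteq>) x y"

definition hadamard :: "nat \<Rightarrow> bool list \<Rightarrow> bool list \<Rightarrow> real" where
  "hadamard n y x = (-1) ^ bdot y x / sqrt (2 ^ n)"

text \<open>Operator norm of Pi_U H^{\<otimes>n} Pi_S (with respect to the Euclidean norm on
  the 2^n-dimensional space; the matrix is real, so real and complex operator norms agree).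
  A vector in the range of Pi_S is a function supported on S.\<close>
definition opnorm_PHP :: "nat \<Rightarrow> bool list set \<Rightarrow> bool list set \<Rightarrow> real" where
  "opnorm_PHP n S U =
     Sup {sqrt (\<Sum>y\<in>U \<inter> bitstrings n. (\<Sum>x\<in>S \<inter> bitstrings n. hadamard n y x * f x)\<^sup>2)
          | f. (\<Sum>x\<in>S \<inter> bitstrings n. (f x)\<^sup>2) \<le> 1}"

definition spec_forr :: "nat \<Rightarrow> bool list set \<Rightarrow> bool list set \<Rightarrow> real" where
  "spec_forr n S U = (opnorm_PHP n S U)\<^sup>2"

definition strong_yes_instance ::
  "nat \<Rightarrow> real \<Rightarrow> real \<Rightarrow> nat \<Rightarrow> bool list set \<Rightarrow> bool list set \<Rightarrow> bool" where
  "strong_yes_instance n t1 t2 v S U \<longleftrightarrow>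
     spec_forr n S U \<ge> t2 \<and>
     (\<forall>\<Delta>. \<Delta> \<subseteq> S \<and> card \<Delta> \<le> v \<longrightarrow> spec_forr n \<Delta> U \<le> t1)"

definition gamma :: "nat \<Rightarrow> (nat \<Rightarrow> bool list) \<Rightarrow> bool list \<Rightarrow> real" where
  "gamma l s y = (1 / real l) *
     (\<Sum>i<l. \<Sum>j<l. (-1) ^ bdot y (bxor (s i) (s j)))"

text \<open>The distribution Strong_kappa over pairs (S,U); S is the underlying set of the
  multiset {s_1,...,s_l}.\<close>
definition Strong :: "nat \<Rightarrow> nat \<Rightarrow> real \<Rightarrow> (bool list set \<times> bool list set) pmf" where
  "Strong n l \<kappa> =
     do {
       s \<leftarrow> Pi_pmf {..<l} [] (\<lambda>_. pmf_of_set (bitstrings n));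
       g \<leftarrow> Pi_pmf (bitstrings n) False
              (\<lambda>y. bernoulli_pmf (1 - exp (- \<kappa> * gamma l s y) / 2));
       return_pmf (s ` {..<l}, {y \<in> bitstrings n. g y})
     }"

end

theory Submission
  imports Defs
begin

definition chi :: "bool list \<Rightarrow> bool list \<Rightarrow> real" where
  "chi y a = (-1) ^ bdot y a"

lemma bdot_Nil1[simp]: "bdot [] a = 0" and bdot_Nil2[simp]: "bdot y [] = 0"
  by (simp_all add: bdot_def)

lemma bdot_Cons[simp]: "bdot (b # y) (c # a) = (if b \<and> c then 1 else 0) + bdot y a"
proof -
  define T where "T = {i. i < length y \<and> i < length a \<and> y ! i \<and> a ! i}"
  have e: "{i. i < length (b#y) \<and> i < length (c#a) \<and> (b#y) ! i \<and> (c#a) ! i}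
     = {i. i = 0 \<and> b \<and> c} \<union> Suc ` T"
  proof (intro set_eqI iffI)
    fix i assume "i \<in> {i. i < length (b#y) \<and> i < length (c#a) \<and> (b#y) ! i \<and> (c#a) ! i}"
    then show "i \<in> {i. i = 0 \<and> b \<and> c} \<union> Suc ` T" unfolding T_def by (cases i) auto
  next
    fix i assume "i \<in> {i. i = 0 \<and> b \<and> c} \<union> Suc ` T"
    then show "i \<in> {i. i < length (b#y) \<and> i < length (c#a) \<and> (b#y) ! i \<and> (c#a) ! i}"
      unfolding T_def by auto
  qed
  have fin: "finite T" unfolding T_def by simp
  have c0: "card {i::nat. i = 0 \<and> b \<and> c} = (if b \<and> c then 1 else 0)" by auto
  have "card ({i. i = 0 \<and> b \<and> c} \<union> Suc ` T) = card {i::nat. i = 0 \<and> b \<and> c} + card (Suc ` T)"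
    using fin by (intro card_Un_disjoint) auto
  also have "card (Suc ` T) = card T" by (simp add: card_image)
  finally show ?thesis unfolding bdot_def e T_def[symmetric] c0 .
qed

lemma bdot_sym: "bdot y a = bdot a y"
  unfolding bdot_def by (rule arg_cong[where f=card]) blast

lemma bdot_zero[simp]: "bdot y (replicate m False) = 0" "bdot (replicate m False) a = 0"
  by (auto simp: bdot_def)

lemma chi_zero[simp]: "chi y (replicate m False) = 1" "chi (replicate m False) a = 1"
  by (simp_all add: chi_def)

lemma chi_sym: "chi y a = chi a y" by (simp add: chi_def bdot_sym)

lemma chi_Nil[simp]: "chi [] a = 1" "chi y [] = 1" by (simp_all add: chi_def)

lemma chi_Cons[simp]: "chi (b # y) (c # a) = (if b \<and> c then -1 else 1) * chi y a"
  by (simp add: chi_def)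

lemma chi_sq[simp]: "chi y a * chi y a = 1"
  by (simp add: chi_def flip: power_add) 

lemma chi_pm: "chi y a = 1 \<or> chi y a = -1"
  by (simp add: chi_def) (metis neg_one_even_power neg_one_odd_power)

lemma chi_pow: "chi y a ^ m = (if even m then 1 else chi y a)"
  using chi_pm[of y a] by auto

lemma chi_mult: "length a = length b \<Longrightarrow> chi y a * chi y b = chi y (bxor a b)"
proof (induction a arbitrary: b y)
  case Nil then show ?case by (simp add: bxor_def)
next
  case (Cons c a)
  then obtain d b' where b: "b = d # b'" by (cases b) auto
  show ?case
  proof (cases y)
    case Nil then show ?thesis by simp
  next
    case (Cons e y')
    have ih: "chi y' a * chi y' b' = chi y' (bxor a b')" using Cons.IH[of b' y'] Cons.prems b by simp
    have bx: "bxor (c # a) (d # b') = (c \<noteq> d) # bxor a b'" by (simp add: bxor_def)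
    have "chi (e # y') (c # a) * chi (e # y') (d # b') =
          ((if e \<and> c then -1 else 1) * (if e \<and> d then -1 else 1)) * (chi y' a * chi y' b')"
      by (simp only: chi_Cons mult_ac)
    also have "\<dots> = (if e \<and> (c \<noteq> d) then -1 else 1) * chi y' (bxor a b')"
      unfolding ih by (cases e; cases c; cases d) simp_all
    finally show ?thesis unfolding Cons b bx by simp
  qed
qed

lemma bitstrings_Suc: "bitstrings (Suc n) = (\<lambda>(b, y). b # y) ` (UNIV \<times> bitstrings n)"
  unfolding bitstrings_def by (auto simp: length_Suc_conv image_iff)

lemma finite_bitstrings[simp]: "finite (bitstrings n)"
  unfolding bitstrings_def using finite_lists_length_eq[of "UNIV::bool set" n] by simp

lemma card_bitstrings: "card (bitstrings n) = 2 ^ n"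
  unfolding bitstrings_def using card_lists_length_eq[of "UNIV::bool set" n] by simp

lemma sum_bitstrings_Suc:
  "(\<Sum>y\<in>bitstrings (Suc n). f y) = (\<Sum>y\<in>bitstrings n. f (True # y)) + (\<Sum>y\<in>bitstrings n. f (False # y))"
proof -
  have "inj_on (\<lambda>(b, y). b # y) (UNIV \<times> bitstrings n)" by (auto simp: inj_on_def)
  then have "(\<Sum>y\<in>bitstrings (Suc n). f y) = (\<Sum>p\<in>UNIV \<times> bitstrings n. f (fst p # snd p))"
    unfolding bitstrings_Suc by (subst sum.reindex) (auto simp: case_prod_beta)
  also have "\<dots> = (\<Sum>b\<in>UNIV. \<Sum>y\<in>bitstrings n. f (b # y))"
    by (simp add: sum.cartesian_product case_prod_beta)
  also have "\<dots> = (\<Sum>y\<in>bitstrings n. f (True # y)) + (\<Sum>y\<in>bitstrings n. f (False # y))"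
    by (simp add: UNIV_bool add.commute)
  finally show ?thesis .
qed

lemma chi_sum: "a \<in> bitstrings n \<Longrightarrow>
  (\<Sum>y\<in>bitstrings n. chi y a) = (if a = replicate n False then 2 ^ n else 0)"
proof (induction n arbitrary: a)
  case 0 then show ?case by (simp add: bitstrings_def)
next
  case (Suc n)
  then obtain c a' where a: "a = c # a'" "a' \<in> bitstrings n"
    by (cases a) (auto simp: bitstrings_def)
  show ?case
    using Suc.IH[OF a(2)] a by (simp add: sum_bitstrings_Suc sum_negf card_bitstrings)
qed

lemma chi_sum': "y \<in> bitstrings n \<Longrightarrow>
  (\<Sum>x\<in>bitstrings n. chi y x) = (if y = replicate n False then 2 ^ n else 0)"
  using chi_sum[of y n] by (simp add: chi_sym)

lemma bxor_length: "length (bxor a b) = min (length a) (length b)"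
  by (simp add: bxor_def)

lemma bxor_zero_iff: "length a = length b \<Longrightarrow> bxor a b = replicate (length a) False \<longleftrightarrow> a = b"
proof (induction a arbitrary: b)
  case Nil then show ?case by (simp add: bxor_def)
next
  case (Cons c a) then show ?case by (cases b) (auto simp: bxor_def)
qed

lemma ortho: "a \<in> bitstrings n \<Longrightarrow> b \<in> bitstrings n \<Longrightarrow>
  (\<Sum>y\<in>bitstrings n. chi y a * chi y b) = (if a = b then 2 ^ n else 0)"
proof -
  assume a: "a \<in> bitstrings n" and b: "b \<in> bitstrings n"
  then have l: "length a = n" "length b = n" by (auto simp: bitstrings_def)
  have "(\<Sum>y\<in>bitstrings n. chi y a * chi y b) = (\<Sum>y\<in>bitstrings n. chi y (bxor a b))"
    using l by (simp add: chi_mult)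
  also have "\<dots> = (if bxor a b = replicate n False then 2 ^ n else 0)"
    by (rule chi_sum) (simp add: bitstrings_def bxor_length l)
  finally show ?thesis using bxor_zero_iff[of a b] l by simp
qed

definition xorl :: "nat \<Rightarrow> bool list list \<Rightarrow> bool list" where
  "xorl n ws = foldr bxor ws (replicate n False)"

lemma xorl_prod: "\<forall>w\<in>set ws. length w = n \<Longrightarrow>
   length (xorl n ws) = n \<and> prod_list (map (chi y) ws) = chi y (xorl n ws)"
proof (induction ws)
  case Nil then show ?case by (simp add: xorl_def)
next
  case (Cons w ws)
  then have ih: "length (xorl n ws) = n" "prod_list (map (chi y) ws) = chi y (xorl n ws)"
    and lw: "length w = n" by auto
  have x: "xorl n (w # ws) = bxor w (xorl n ws)" by (simp add: xorl_def)
  have "length (xorl n (w # ws)) = n" unfolding x using ih lw by (simp add: bxor_length)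
  moreover have "prod_list (map (chi y) (w # ws)) = chi y (xorl n (w # ws))"
    unfolding x using ih lw chi_mult[of w "xorl n ws" y] by simp
  ultimately show ?case by blast
qed

lemma chi_prod_sum: "\<forall>w\<in>set ws. w \<in> bitstrings n \<Longrightarrow>
  (\<Sum>y\<in>bitstrings n. prod_list (map (chi y) ws)) \<in> {0, 2 ^ n}"
proof -
  assume "\<forall>w\<in>set ws. w \<in> bitstrings n"
  then have h: "\<forall>w\<in>set ws. length w = n" by (auto simp: bitstrings_def)
  have "(\<Sum>y\<in>bitstrings n. prod_list (map (chi y) ws)) = (\<Sum>y\<in>bitstrings n. chi y (xorl n ws))"
    using xorl_prod[OF h] by simp
  also have "\<dots> \<in> {0, 2^n}"
  proof -
    have "xorl n ws \<in> bitstrings n" using xorl_prod[OF h] by (simp add: bitstrings_def)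
    from chi_sum[OF this] show ?thesis by simp
  qed
  finally show ?thesis .
qed


definition LL :: "nat \<Rightarrow> nat \<Rightarrow> nat list set" where
  "LL l m = {t. set t \<subseteq> {..<l} \<and> length t = m}"

definition evl :: "nat list \<Rightarrow> bool" where
  "evl t \<longleftrightarrow> (\<forall>k. even (count_list t k))"

lemma finite_LL[simp]: "finite (LL l m)"
  unfolding LL_def by (rule finite_lists_length_eq) simp

lemma card_LL: "card (LL l m) = l ^ m"
  unfolding LL_def using card_lists_length_eq[of "{..<l}" m] by simp

lemma LL_Suc: "LL l (Suc m) = (\<lambda>(i, t). i # t) ` ({..<l} \<times> LL l m)"
  unfolding LL_def by (auto simp: length_Suc_conv image_iff)

lemma power_sum_lists: fixes f :: "nat \<Rightarrow> real" shows
  "(\<Sum>i<l. f i) ^ m = (\<Sum>t\<in>LL l m. prod_list (map f t))"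
proof (induction m)
  case 0
  have "LL l 0 = {[]}" by (auto simp: LL_def)
  then show ?case by simp
next
  case (Suc m)
  have inj: "inj_on (\<lambda>(i, t). i # t) ({..<l} \<times> LL l m)" by (auto simp: inj_on_def)
  have "(\<Sum>t\<in>LL l (Suc m). prod_list (map f t)) = (\<Sum>p\<in>{..<l} \<times> LL l m. f (fst p) * prod_list (map f (snd p)))"
    unfolding LL_Suc by (subst sum.reindex[OF inj]) (simp add: case_prod_beta)
  also have "\<dots> = (\<Sum>i<l. \<Sum>t\<in>LL l m. f i * prod_list (map f t))"
    by (simp add: sum.cartesian_product case_prod_beta)
  also have "\<dots> = (\<Sum>i<l. f i) * (\<Sum>t\<in>LL l m. prod_list (map f t))"
    by (simp add: sum_distrib_left sum_distrib_right sum.swap[of _ "LL l m"])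
  finally show ?case using Suc by simp
qed

lemma prod_list_split: fixes g :: "'a \<Rightarrow> real" shows "prod_list (map g t) = g k ^ count_list t k * prod_list (map g (filter (\<lambda>i. i \<noteq> k) t))"
  by (induction t) (auto simp: mult_ac)

lemma evl_Nil[simp]: "evl []" by (simp add: evl_def)

lemma evl_pad: "evl (t @ [k, k]) \<longleftrightarrow> evl t"
  unfolding evl_def by auto

lemma evl_bound:
  "card {t\<in>LL l (Suc (Suc m)). evl t} \<le> l * Suc m * card {t\<in>LL l m. evl t}"
proof -
  define F where "F = (\<lambda>(a::nat, p::nat, u::nat list). a # (take p u @ a # drop p u))"
  have sub: "{t\<in>LL l (Suc (Suc m)). evl t} \<subseteq> F ` ({..<l} \<times> {..m} \<times> {t\<in>LL l m. evl t})"
  proof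
    fix t assume t: "t \<in> {t\<in>LL l (Suc (Suc m)). evl t}"
    then obtain a xs where tx: "t = a # xs" unfolding LL_def by (cases t) auto
    have "even (count_list t a)" using t unfolding evl_def by auto
    then have "odd (count_list xs a)" using tx by simp
    then have "a \<in> set xs" by (metis count_notin even_zero)
    then obtain ys zs where xs: "xs = ys @ a # zs" by (meson split_list)
    define u where "u = ys @ zs"
    have lu: "length u = m" using t tx xs unfolding LL_def u_def by simp
    have su: "set u \<subseteq> {..<l}" using t tx xs unfolding LL_def u_def by auto
    have cu: "count_list t k = count_list u k + (if k = a then 2 else 0)" for k
      unfolding tx xs u_def by simp
    have eu: "evl u" unfolding evl_def
    proof
      fix k
      have "even (count_list t k)" using t unfolding evl_def by auto
      then show "even (count_list u k)" using cu[of k] by (simp split: if_splits)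
    qed
    have "t = F (a, length ys, u)" unfolding F_def tx xs u_def by simp
    moreover have "(a, length ys, u) \<in> {..<l} \<times> {..m} \<times> {t\<in>LL l m. evl t}"
      using t tx lu su eu unfolding LL_def u_def by auto
    ultimately show "t \<in> F ` ({..<l} \<times> {..m} \<times> {t\<in>LL l m. evl t})" by blast
  qed
  have "card {t\<in>LL l (Suc (Suc m)). evl t} \<le> card (F ` ({..<l} \<times> {..m} \<times> {t\<in>LL l m. evl t}))"
    by (intro card_mono finite_imageI sub) auto
  also have "\<dots> \<le> card ({..<l} \<times> {..m} \<times> {t\<in>LL l m. evl t})"
    by (rule card_image_le) auto
  also have "\<dots> = l * Suc m * card {t\<in>LL l m. evl t}" by (simp add: card_cartesian_product algebra_simps)
  finally show ?thesis .
qed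

lemma Ev0: "card {t\<in>LL l 0. evl t} = 1"
proof -
  have "{t\<in>LL l 0. evl t} = {[]}" by (auto simp: LL_def)
  then show ?thesis by simp
qed

lemma Ev2_le: "card {t\<in>LL l 2. evl t} \<le> l"
  using evl_bound[of l 0] Ev0[of l] by (simp add: numeral_2_eq_2)

lemma Ev4_le: "card {t\<in>LL l 4. evl t} \<le> 3 * l^2"
proof -
  have "card {t\<in>LL l 4. evl t} \<le> l * 3 * card {t\<in>LL l 2. evl t}"
    using evl_bound[of l 2] by (simp add: numeral_eq_Suc)
  also have "\<dots> \<le> l * 3 * l" using Ev2_le[of l] by simp
  finally show ?thesis by (simp add: power2_eq_square)
qed

lemma Ev6_le: "card {t\<in>LL l 6. evl t} \<le> 15 * l^3"
proof -
  have "card {t\<in>LL l 6. evl t} \<le> l * 5 * card {t\<in>LL l 4. evl t}"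
    using evl_bound[of l 4] by (simp add: numeral_eq_Suc)
  also have "\<dots> \<le> l * 5 * (3 * l^2)" using Ev4_le[of l] by simp
  finally show ?thesis by (simp add: power3_eq_cube power2_eq_square)
qed

lemma Ev2_ge: "l \<le> card {t\<in>LL l 2. evl t}"
proof -
  have "(\<lambda>a. [a, a]) ` {..<l} \<subseteq> {t\<in>LL l 2. evl t}"
    by (auto simp: LL_def evl_def)
  moreover have "inj_on (\<lambda>a. [a, a]) {..<l}" by (auto simp: inj_on_def)
  ultimately show ?thesis
    by (metis (no_types, lifting) card_image card_lessThan card_mono finite_LL finite_subset mem_Collect_eq subsetI)
qed

lemma evl_two: "evl [a, b] \<longleftrightarrow> a = b"
  unfolding evl_def by auto

lemma evl4_diff: "i \<noteq> j \<Longrightarrow> {t\<in>LL l 2. evl (t @ [i, j])} \<subseteq> {[i, j], [j, i]}"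
proof
  fix t assume ij: "i \<noteq> j" and t: "t \<in> {t\<in>LL l 2. evl (t @ [i, j])}"
  then obtain a b where tab: "t = [a, b]" unfolding LL_def
    by (auto simp: numeral_2_eq_2 length_Suc_conv)
  have e: "evl [a, b, i, j]" using t tab by simp
  have ci: "count_list [a, b, i, j] i = (if a = i then 1 else 0) + (if b = i then 1 else 0) + 1"
    using ij by simp
  have cj: "count_list [a, b, i, j] j = (if a = j then 1 else 0) + (if b = j then 1 else 0) + 1"
    using ij by simp
  have ei: "even (count_list [a, b, i, j] i)" and ej: "even (count_list [a, b, i, j] j)"
    using e unfolding evl_def by blast+
  have "(a = i \<and> b = j) \<or> (a = j \<and> b = i)"
    using ei ej ij unfolding ci cj by (auto split: if_splits)
  then show "t \<in> {[i, j], [j, i]}" unfolding tab by auto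
qed

lemma card_diag_off: "card {p\<in>{..<l} \<times> {..<l}. fst p \<noteq> snd p} = l * l - l"
proof -
  have "{..<l} \<times> {..<l} = {p\<in>{..<l} \<times> {..<l}. fst p \<noteq> snd p} \<union> (\<lambda>a. (a, a)) ` {..<l}" by auto
  moreover have "card ((\<lambda>a. (a, a)) ` {..<l}) = l" by (subst card_image) (auto simp: inj_on_def)
  moreover have "card ({p\<in>{..<l} \<times> {..<l}. fst p \<noteq> snd p} \<union> (\<lambda>a. (a, a)) ` {..<l}) =
     card {p\<in>{..<l} \<times> {..<l}. fst p \<noteq> snd p} + card ((\<lambda>a. (a, a)) ` {..<l})"
    by (intro card_Un_disjoint) auto
  ultimately have "l * l = card {p\<in>{..<l} \<times> {..<l}. fst p \<noteq> snd p} + l"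
    by (metis card_cartesian_product card_lessThan)
  then show ?thesis by simp
qed

lemma Ev4_ge: "3 * l * l - 2 * l \<le> card {t\<in>LL l 4. evl t}"
proof -
  define D where "D = {p\<in>{..<l} \<times> {..<l}. fst p \<noteq> snd p}"
  define T1 where "T1 = (\<lambda>(a, b). [a, a, b, b]) ` ({..<l} \<times> {..<l})"
  define T2 where "T2 = (\<lambda>(a, b). [a, b, a, b]) ` D"
  define T3 where "T3 = (\<lambda>(a, b). [a, b, b, a]) ` D"
  have c1: "card T1 = l * l" unfolding T1_def by (subst card_image) (auto simp: inj_on_def)
  have c2: "card T2 = l * l - l" unfolding T2_def D_def using card_diag_off[of l]
    by (subst card_image) (auto simp: inj_on_def)
  have c3: "card T3 = l * l - l" unfolding T3_def D_def using card_diag_off[of l]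
    by (subst card_image) (auto simp: inj_on_def)
  have fD: "finite D" unfolding D_def by simp
  have d12: "T1 \<inter> T2 = {}" unfolding T1_def T2_def D_def by auto
  have d13: "T1 \<inter> T3 = {}" unfolding T1_def T3_def D_def by auto
  have d23: "T2 \<inter> T3 = {}" unfolding T2_def T3_def D_def by auto
  have "card (T1 \<union> T2 \<union> T3) = card T1 + card T2 + card T3"
    using d12 d13 d23 fD
    by (subst card_Un_disjoint, simp add: T1_def T2_def, simp add: T3_def, blast)
       (subst card_Un_disjoint, auto simp: T1_def T2_def)
  also have "\<dots> = 3 * l * l - 2 * l" using c1 c2 c3 by (cases l) (auto simp: algebra_simps)
  finally have eq: "card (T1 \<union> T2 \<union> T3) = 3 * l * l - 2 * l" .
  have "T1 \<union> T2 \<union> T3 \<subseteq> {t\<in>LL l 4. evl t}"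
    unfolding T1_def T2_def T3_def D_def LL_def evl_def by auto
  then have "card (T1 \<union> T2 \<union> T3) \<le> card {t\<in>LL l 4. evl t}"
    by (intro card_mono) auto
  then show ?thesis using eq by simp
qed


lemma count_filter: "count_list (filter P xs) x = (if P x then count_list xs x else 0)"
  by (induction xs) auto

lemma prod_even:
  fixes g :: "nat \<Rightarrow> real"
  assumes g: "\<And>k. g k * g k = 1"
  shows "evl t \<Longrightarrow> prod_list (map g t) = 1"
proof (induction "length t" arbitrary: t rule: less_induct)
  case less
  show ?case
  proof (cases t)
    case Nil then show ?thesis by simp
  next
    case (Cons k r)
    have ev: "even (count_list t k)" using less.prems unfolding evl_def by blast
    have gp: "g k ^ count_list t k = 1"
      using ev by (metis evenE g power2_eq_square power_mult power_one)
    have "evl (filter (\<lambda>i. i \<noteq> k) t)"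
      using less.prems unfolding evl_def by (simp add: count_filter)
    moreover have "length (filter (\<lambda>i. i \<noteq> k) t) < length t"
      using Cons by (simp add: le_imp_less_Suc)
    ultimately have "prod_list (map g (filter (\<lambda>i. i \<noteq> k) t)) = 1" using less.hyps by blast
    then show ?thesis using prod_list_split[of g t k] gp by simp
  qed
qed

definition cc :: "nat \<Rightarrow> (nat \<Rightarrow> bool list) \<Rightarrow> nat list \<Rightarrow> real" where
  "cc n s t = (1 / 2 ^ n) * (\<Sum>y\<in>bitstrings n. prod_list (map (\<lambda>i. chi y (s i)) t))"

lemma cc_01: "(\<And>i. i \<in> set t \<Longrightarrow> s i \<in> bitstrings n) \<Longrightarrow> cc n s t = 0 \<or> cc n s t = 1"
proof -
  assume h: "\<And>i. i \<in> set t \<Longrightarrow> s i \<in> bitstrings n"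
  have "(\<Sum>y\<in>bitstrings n. prod_list (map (chi y) (map s t))) \<in> {0, 2 ^ n}"
    by (rule chi_prod_sum) (use h in auto)
  then show ?thesis unfolding cc_def by (auto simp: o_def)
qed

lemma cc_even: "evl t \<Longrightarrow> cc n s t = 1"
proof -
  assume e: "evl t"
  have "prod_list (map (\<lambda>i. chi y (s i)) t) = 1" for y
    by (rule prod_even[OF _ e]) simp
  then show ?thesis unfolding cc_def by (simp add: card_bitstrings)
qed

lemma cc_pad: "cc n s (t @ [k, k]) = cc n s t"
  unfolding cc_def by simp

lemma cc_swap_pad: "cc n s (t @ [i, i]) = cc n s t"
  by (rule cc_pad)

definition Gen :: "nat \<Rightarrow> nat \<Rightarrow> (nat \<Rightarrow> bool list) \<Rightarrow> bool" where
  "Gen n l s \<longleftrightarrow> (\<forall>t\<in>LL l 6. \<not> evl t \<longrightarrow> cc n s t = 0)"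

lemma Gen_small:
  assumes G: "Gen n l s" and l: "0 < l" and t: "t \<in> LL l m" and m: "m = 2 \<or> m = 4 \<or> m = 6"
    and ne: "\<not> evl t"
  shows "cc n s t = 0"
proof -
  have t6: "t \<in> LL l 6 \<Longrightarrow> \<not> evl t \<Longrightarrow> cc n s t = 0" for t using G unfolding Gen_def by blast
  consider "m = 2" | "m = 4" | "m = 6" using m by blast
  then show ?thesis
  proof cases
    case 1
    have "t @ [0, 0] @ [0, 0] \<in> LL l 6" using t l 1 unfolding LL_def by auto
    moreover have "\<not> evl (t @ [0, 0] @ [0, 0])" using ne evl_pad[of "t @ [0,0]" 0] evl_pad[of t 0] by simp
    ultimately have "cc n s (t @ [0, 0] @ [0, 0]) = 0" by (rule t6)
    then show ?thesis using cc_pad[of n s "t @ [0,0]" 0] cc_pad[of n s t 0] by simp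
  next
    case 2
    have "t @ [0, 0] \<in> LL l 6" using t l 2 unfolding LL_def by auto
    moreover have "\<not> evl (t @ [0, 0])" using ne evl_pad[of t 0] by simp
    ultimately have "cc n s (t @ [0, 0]) = 0" by (rule t6)
    then show ?thesis using cc_pad[of n s t 0] by simp
  next
    case 3 then show ?thesis using t6 t ne by simp
  qed
qed

context
  fixes n l :: nat and s :: "nat \<Rightarrow> bool list"
  assumes l0: "0 < l" and sY: "\<And>i. i < l \<Longrightarrow> s i \<in> bitstrings n"
begin

lemma cc01': "t \<in> LL l m \<Longrightarrow> cc n s t = 0 \<or> cc n s t = 1"
  by (rule cc_01) (use sY in \<open>auto simp: LL_def\<close>)

definition sig :: "bool list \<Rightarrow> real" where "sig y = (\<Sum>i<l. chi y (s i))"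
definition gam :: "bool list \<Rightarrow> real" where "gam y = (sig y)\<^sup>2 / l"

lemma gamma_eq: "gamma l s y = gam y"
proof -
  have "gamma l s y = (1 / real l) * (\<Sum>i<l. \<Sum>j<l. chi y (s i) * chi y (s j))"
    unfolding gamma_def chi_def[symmetric]
    using sY by (intro arg_cong[where f="\<lambda>x. (1 / real l) * x"] sum.cong refl chi_mult[symmetric])
      (auto simp: bitstrings_def)
  also have "\<dots> = gam y" unfolding gam_def sig_def power2_eq_square
    by (simp add: sum_product)
  finally show ?thesis .
qed

lemma gam_nonneg: "0 \<le> gam y" unfolding gam_def by simp

lemma mom: "(1 / 2 ^ n) * (\<Sum>y\<in>bitstrings n. gam y ^ k) = (1 / real l ^ k) * (\<Sum>t\<in>LL l (2 * k). cc n s t)"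
proof -
  have "gam y ^ k = (1 / real l ^ k) * (\<Sum>t\<in>LL l (2 * k). prod_list (map (\<lambda>i. chi y (s i)) t))" for y
  proof -
    have "gam y ^ k = sig y ^ (2 * k) / real l ^ k" by (simp add: gam_def power_divide power_mult)
    then show ?thesis unfolding sig_def power_sum_lists by simp
  qed
  then have "(\<Sum>y\<in>bitstrings n. gam y ^ k) = (1 / real l ^ k) * (\<Sum>t\<in>LL l (2 * k). \<Sum>y\<in>bitstrings n. prod_list (map (\<lambda>i. chi y (s i)) t))"
    by (simp add: sum_distrib_left sum.swap[of _ "LL l (2 * k)"])
  moreover have "(\<Sum>t\<in>LL l (2 * k). (1 / 2 ^ n) * (\<Sum>y\<in>bitstrings n. prod_list (map (\<lambda>i. chi y (s i)) t)))
     = (1 / 2 ^ n) * (\<Sum>t\<in>LL l (2 * k). \<Sum>y\<in>bitstrings n. prod_list (map (\<lambda>i. chi y (s i)) t))"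
    by (rule sum_distrib_left[symmetric])
  ultimately show ?thesis unfolding cc_def by (simp only: mult_ac)
qed

lemma mom': "m = 2 * k \<Longrightarrow> (1 / 2 ^ n) * (\<Sum>y\<in>bitstrings n. gam y ^ k) = (1 / real l ^ k) * (\<Sum>t\<in>LL l m. cc n s t)"
  using mom by simp

lemma sum_cc_ge: "card {t\<in>LL l m. evl t} \<le> (\<Sum>t\<in>LL l m. cc n s t)"
proof -
  have "real (card {t\<in>LL l m. evl t}) = (\<Sum>t\<in>{t\<in>LL l m. evl t}. cc n s t)"
    by (simp add: cc_even)
  also have "\<dots> \<le> (\<Sum>t\<in>LL l m. cc n s t)"
    by (intro sum_mono2) (auto dest: cc01'[where m=m])
  finally show ?thesis .
qed

lemma sum_cc_le: assumes G: "Gen n l s" and m: "m = 2 \<or> m = 4 \<or> m = 6"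
  shows "(\<Sum>t\<in>LL l m. cc n s t) \<le> card {t\<in>LL l m. evl t}"
proof -
  have "(\<Sum>t\<in>LL l m. cc n s t) = (\<Sum>t\<in>{t\<in>LL l m. evl t}. cc n s t)"
    by (rule sum.mono_neutral_right) (auto intro: Gen_small[OF G l0 _ m])
  also have "\<dots> = card {t\<in>LL l m. evl t}" by (simp add: cc_even)
  finally show ?thesis by simp
qed

lemma mom1: "1 \<le> (1 / 2 ^ n) * (\<Sum>y\<in>bitstrings n. gam y)"
proof -
  have "real l \<le> (\<Sum>t\<in>LL l 2. cc n s t)" using sum_cc_ge[of 2] Ev2_ge[of l] by linarith
  moreover have "(1 / 2 ^ n) * (\<Sum>y\<in>bitstrings n. gam y) = (1 / real l) * (\<Sum>t\<in>LL l 2. cc n s t)"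
    using mom'[of 2 1] by simp
  ultimately have e: "(\<Sum>y\<in>bitstrings n. gam y) = (2 ^ n / real l) * (\<Sum>t\<in>LL l 2. cc n s t)"
    and le: "real l \<le> (\<Sum>t\<in>LL l 2. cc n s t)"
    using l0 by (auto simp: field_simps)
  have "(2 ^ n / real l) * real l \<le> (2 ^ n / real l) * (\<Sum>t\<in>LL l 2. cc n s t)"
    by (rule mult_left_mono[OF le]) simp
  then have "2 ^ n \<le> (\<Sum>y\<in>bitstrings n. gam y)" using l0 e by simp
  then show ?thesis by (simp add: field_simps)
qed

lemma mom2: "3 - 2 / real l \<le> (1 / 2 ^ n) * (\<Sum>y\<in>bitstrings n. (gam y)\<^sup>2)"
proof -
  have a: "real (card {t\<in>LL l 4. evl t}) \<le> (\<Sum>t\<in>LL l 4. cc n s t)" by (rule sum_cc_ge)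
  have b: "real (3 * l * l - 2 * l) \<le> real (card {t\<in>LL l 4. evl t})"
    using Ev4_ge[of l] by (simp only: of_nat_le_iff)
  have c: "real (3 * l * l - 2 * l) = 3 * real l * real l - 2 * real l" by (simp add: of_nat_diff)
  have le: "3 * real l * real l - 2 * real l \<le> (\<Sum>t\<in>LL l 4. cc n s t)" using a b c by linarith
  have e: "(1 / 2 ^ n) * (\<Sum>y\<in>bitstrings n. (gam y)\<^sup>2) = (\<Sum>t\<in>LL l 4. cc n s t) / (real l * real l)"
    using mom'[of 4 2] by (simp add: power2_eq_square)
  have "(3 * real l * real l - 2 * real l) / (real l * real l) \<le> (\<Sum>t\<in>LL l 4. cc n s t) / (real l * real l)"
    using le by (intro divide_right_mono) auto
  moreover have "(3 * real l * real l - 2 * real l) / (real l * real l) = 3 - 2 / real l"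
    using l0 by (simp add: field_simps)
  ultimately show ?thesis using e by simp
qed

lemma mom3: assumes G: "Gen n l s" shows "(1 / 2 ^ n) * (\<Sum>y\<in>bitstrings n. gam y ^ 3) \<le> 15"
proof -
  have "(\<Sum>t\<in>LL l 6. cc n s t) \<le> 15 * real l ^ 3"
  proof -
    have "real (card {t\<in>LL l 6. evl t}) \<le> real (15 * l ^ 3)" using Ev6_le[of l] by (simp only: of_nat_le_iff)
    then show ?thesis using sum_cc_le[OF G, of 6] by simp
  qed
  then have "(\<Sum>t\<in>LL l 6. cc n s t) / real l ^ 3 \<le> 15" using l0 by (simp add: field_simps)
  then show ?thesis using mom'[of 6 3] by simp
qed

lemma Gen_inj: assumes G: "Gen n l s" and ij: "i < l" "j < l" "i \<noteq> j" shows "s i \<noteq> s j"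
proof
  assume e: "s i = s j"
  have "[i, j] \<in> LL l 2" using ij by (auto simp: LL_def)
  moreover have "\<not> evl [i, j]" using ij(3) by (simp add: evl_two)
  ultimately have "cc n s [i, j] = 0" by (intro Gen_small[OF G l0]) auto
  moreover have "cc n s [i, j] = 1" unfolding cc_def by (simp add: e card_bitstrings)
  ultimately show False by simp
qed

definition Gf :: "bool list \<Rightarrow> bool list \<Rightarrow> real" where
  "Gf x x' = (1 / 2 ^ n) * (\<Sum>y\<in>bitstrings n. gam y * chi y x * chi y x')"

lemma Gf_eq: "i < l \<Longrightarrow> j < l \<Longrightarrow> Gf (s i) (s j) = (1 / real l) * (\<Sum>t\<in>LL l 2. cc n s (t @ [i, j]))"
proof -
  have "gam y * chi y (s i) * chi y (s j) = (1 / real l) * (\<Sum>t\<in>LL l 2. prod_list (map (\<lambda>k. chi y (s k)) (t @ [i, j])))" for y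
  proof -
    have "gam y * chi y (s i) * chi y (s j) = (1 / real l) * ((\<Sum>t\<in>LL l 2. prod_list (map (\<lambda>k. chi y (s k)) t)) * (chi y (s i) * chi y (s j)))"
      unfolding gam_def sig_def power_sum_lists by simp
    also have "\<dots> = (1 / real l) * (\<Sum>t\<in>LL l 2. prod_list (map (\<lambda>k. chi y (s k)) t) * (chi y (s i) * chi y (s j)))"
      by (simp only: sum_distrib_right)
    finally show ?thesis by simp
  qed
  then have "(\<Sum>y\<in>bitstrings n. gam y * chi y (s i) * chi y (s j)) =
      (\<Sum>y\<in>bitstrings n. (1 / real l) * (\<Sum>t\<in>LL l 2. prod_list (map (\<lambda>k. chi y (s k)) (t @ [i, j]))))"
    by (rule sum.cong[OF refl])
  also have "\<dots> = (1 / real l) * (\<Sum>y\<in>bitstrings n. \<Sum>t\<in>LL l 2. prod_list (map (\<lambda>k. chi y (s k)) (t @ [i, j])))"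
    by (rule sum_distrib_left[symmetric])
  also have "(\<Sum>y\<in>bitstrings n. \<Sum>t\<in>LL l 2. prod_list (map (\<lambda>k. chi y (s k)) (t @ [i, j])))
     = (\<Sum>t\<in>LL l 2. \<Sum>y\<in>bitstrings n. prod_list (map (\<lambda>k. chi y (s k)) (t @ [i, j])))"
    by (rule sum.swap)
  finally have h1: "(\<Sum>y\<in>bitstrings n. gam y * chi y (s i) * chi y (s j)) =
      (1 / real l) * (\<Sum>t\<in>LL l 2. \<Sum>y\<in>bitstrings n. prod_list (map (\<lambda>k. chi y (s k)) (t @ [i, j])))" .
  have h2: "(\<Sum>t\<in>LL l 2. cc n s (t @ [i, j]))
     = (1 / 2 ^ n) * (\<Sum>t\<in>LL l 2. \<Sum>y\<in>bitstrings n. prod_list (map (\<lambda>k. chi y (s k)) (t @ [i, j])))"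
    unfolding cc_def by (rule sum_distrib_left[symmetric])
  show ?thesis unfolding Gf_def h1 h2 by (simp only: mult.left_commute)
qed

lemma Gf_nonneg: "i < l \<Longrightarrow> j < l \<Longrightarrow> 0 \<le> Gf (s i) (s j)"
proof -
  assume ij: "i < l" "j < l"
  have "0 \<le> cc n s (t @ [i, j])" if "t \<in> LL l 2" for t
  proof -
    have "t @ [i, j] \<in> LL l 4" using that ij by (auto simp: LL_def)
    then show ?thesis using cc01'[of "t @ [i,j]" 4] by auto
  qed
  then show ?thesis unfolding Gf_eq[OF ij] by (intro mult_nonneg_nonneg sum_nonneg) auto
qed

lemma Gf_le: assumes G: "Gen n l s" and ij: "i < l" "j < l"
  shows "Gf (s i) (s j) \<le> (if i = j then 1 else 0) + 2 / real l"
proof (cases "i = j")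
  case True
  have e1: "cc n s (t @ [i, j]) = cc n s t" for t unfolding True by (rule cc_pad)
  have "(\<Sum>t\<in>LL l 2. cc n s (t @ [i, j])) = (\<Sum>t\<in>LL l 2. cc n s t)" by (simp only: e1)
  also have "\<dots> \<le> real l"
  proof -
    have "real (card {t\<in>LL l 2. evl t}) \<le> real l" using Ev2_le[of l] by (simp only: of_nat_le_iff)
    moreover have "(\<Sum>t\<in>LL l 2. cc n s t) \<le> real (card {t\<in>LL l 2. evl t})"
      by (rule sum_cc_le[OF G]) simp
    ultimately show ?thesis by linarith
  qed
  finally have S: "(\<Sum>t\<in>LL l 2. cc n s (t @ [i, j])) \<le> real l" .
  have "(1 / real l) * (\<Sum>t\<in>LL l 2. cc n s (t @ [i, j])) \<le> (1 / real l) * real l"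
    by (rule mult_left_mono[OF S]) simp
  also have "(1 / real l) * real l = 1" using l0 by simp
  finally have g1: "Gf (s i) (s j) \<le> 1" unfolding Gf_eq[OF ij] .
  have "(1::real) \<le> 1 + 2 / real l" by simp
  from order_trans[OF g1 this] show ?thesis unfolding if_P[OF True] .
next
  case False
  have "(\<Sum>t\<in>LL l 2. cc n s (t @ [i, j])) = (\<Sum>t\<in>{t\<in>LL l 2. evl (t @ [i, j])}. cc n s (t @ [i, j]))"
  proof (rule sum.mono_neutral_right)
    show "\<forall>t\<in>LL l 2 - {t \<in> LL l 2. evl (t @ [i, j])}. cc n s (t @ [i, j]) = 0"
    proof
      fix t assume t: "t \<in> LL l 2 - {t \<in> LL l 2. evl (t @ [i, j])}"
      then have "t @ [i, j] \<in> LL l 4" using ij by (auto simp: LL_def)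
      moreover have "\<not> evl (t @ [i, j])" using t by blast
      ultimately show "cc n s (t @ [i, j]) = 0" by (intro Gen_small[OF G l0, of _ 4]) auto
    qed
  qed auto
  also have "\<dots> = (\<Sum>t\<in>{t\<in>LL l 2. evl (t @ [i, j])}. 1)"
    by (rule sum.cong[OF refl]) (rule cc_even, blast)
  also have "\<dots> = card {t\<in>LL l 2. evl (t @ [i, j])}" by simp
  also have "\<dots> \<le> 2"
  proof -
    have "card {t\<in>LL l 2. evl (t @ [i, j])} \<le> card {[i, j], [j, i]}"
      by (rule card_mono[OF _ evl4_diff[OF False]]) simp
    also have "\<dots> \<le> 2" using False by simp
    finally show ?thesis by simp
  qed
  finally have S: "(\<Sum>t\<in>LL l 2. cc n s (t @ [i, j])) \<le> 2" .
  have "(1 / real l) * (\<Sum>t\<in>LL l 2. cc n s (t @ [i, j])) \<le> (1 / real l) * 2"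
    by (rule mult_left_mono[OF S]) simp
  also have "(1 / real l) * 2 = 2 / real l" by simp
  finally have "Gf (s i) (s j) \<le> 2 / real l" unfolding Gf_eq[OF ij] .
  then show ?thesis unfolding if_not_P[OF False] by simp
qed

end


definition Qf :: "nat \<Rightarrow> bool list set \<Rightarrow> bool list set \<Rightarrow> (bool list \<Rightarrow> real) \<Rightarrow> real" where
  "Qf n S U f = (\<Sum>y\<in>U \<inter> bitstrings n. (\<Sum>x\<in>S \<inter> bitstrings n. hadamard n y x * f x)\<^sup>2)"

lemma hadamard_chi: "hadamard n y x = chi y x / sqrt (2 ^ n)"
  by (simp add: hadamard_def chi_def)

lemma sq_sum_expand:
  fixes a :: "'b \<Rightarrow> 'a \<Rightarrow> real"
  shows "(\<Sum>y\<in>B. (\<Sum>x\<in>A. a y x)\<^sup>2) = (\<Sum>x\<in>A. \<Sum>x'\<in>A. \<Sum>y\<in>B. a y x * a y x')"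
proof -
  have "(\<Sum>y\<in>B. (\<Sum>x\<in>A. a y x)\<^sup>2) = (\<Sum>y\<in>B. \<Sum>x\<in>A. \<Sum>x'\<in>A. a y x * a y x')"
    by (simp add: power2_eq_square sum_product)
  also have "\<dots> = (\<Sum>x\<in>A. \<Sum>y\<in>B. \<Sum>x'\<in>A. a y x * a y x')" by (rule sum.swap)
  also have "\<dots> = (\<Sum>x\<in>A. \<Sum>x'\<in>A. \<Sum>y\<in>B. a y x * a y x')"
    by (rule sum.cong[OF refl]) (rule sum.swap)
  finally show ?thesis .
qed

lemma Q_expand:
  "Qf n S U f = (\<Sum>x\<in>S \<inter> bitstrings n. \<Sum>x'\<in>S \<inter> bitstrings n.
      f x * f x' * ((1 / 2 ^ n) * (\<Sum>y\<in>U \<inter> bitstrings n. chi y x * chi y x')))"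
proof -
  have "Qf n S U f = (\<Sum>x\<in>S \<inter> bitstrings n. \<Sum>x'\<in>S \<inter> bitstrings n. \<Sum>y\<in>U \<inter> bitstrings n.
      (hadamard n y x * f x) * (hadamard n y x' * f x'))"
    unfolding Qf_def by (rule sq_sum_expand)
  also have "\<dots> = (\<Sum>x\<in>S \<inter> bitstrings n. \<Sum>x'\<in>S \<inter> bitstrings n.
      f x * f x' * ((1 / 2 ^ n) * (\<Sum>y\<in>U \<inter> bitstrings n. chi y x * chi y x')))"
  proof (intro sum.cong refl)
    fix x x'
    have "(hadamard n y x * f x) * (hadamard n y x' * f x') = f x * f x' * ((1 / 2 ^ n) * (chi y x * chi y x'))" for y
    proof -
      have "sqrt (2 ^ n) * sqrt (2 ^ n) = (2::real) ^ n" by simp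
      then show ?thesis unfolding hadamard_chi by (simp add: field_simps)
    qed
    then show "(\<Sum>y\<in>U \<inter> bitstrings n. (hadamard n y x * f x) * (hadamard n y x' * f x')) =
      f x * f x' * ((1 / 2 ^ n) * (\<Sum>y\<in>U \<inter> bitstrings n. chi y x * chi y x'))"
      by (simp add: sum_distrib_left)
  qed
  finally show ?thesis .
qed

lemma parseval: "Qf n S (bitstrings n) f = (\<Sum>x\<in>S \<inter> bitstrings n. (f x)\<^sup>2)"
proof -
  have "Qf n S (bitstrings n) f = (\<Sum>x\<in>S \<inter> bitstrings n. \<Sum>x'\<in>S \<inter> bitstrings n.
      f x * f x' * (if x = x' then 1 else 0))"
    unfolding Q_expand
  proof (intro sum.cong refl)
    fix x x' assume "x \<in> S \<inter> bitstrings n" "x' \<in> S \<inter> bitstrings n"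
    then have "(\<Sum>y\<in>bitstrings n \<inter> bitstrings n. chi y x * chi y x') = (if x = x' then 2 ^ n else 0)"
      using ortho[of x n x'] by simp
    then show "f x * f x' * ((1 / 2 ^ n) * (\<Sum>y\<in>bitstrings n \<inter> bitstrings n. chi y x * chi y x')) =
      f x * f x' * (if x = x' then 1 else 0)" by simp
  qed
  also have "\<dots> = (\<Sum>x\<in>S \<inter> bitstrings n. (f x)\<^sup>2)"
  proof (rule sum.cong[OF refl])
    fix x assume x: "x \<in> S \<inter> bitstrings n"
    have "(\<Sum>x'\<in>S \<inter> bitstrings n. f x * f x' * (if x = x' then 1 else 0)) =
          (\<Sum>x'\<in>S \<inter> bitstrings n. (if x' = x then f x * f x else 0))"
      by (rule sum.cong) auto
    also have "\<dots> = f x * f x" using x by (simp add: sum.delta)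
    finally show "(\<Sum>x'\<in>S \<inter> bitstrings n. f x * f x' * (if x = x' then 1 else 0)) = (f x)\<^sup>2"
      by (simp add: power2_eq_square)
  qed
  finally show ?thesis .
qed

lemma Qf_nonneg: "0 \<le> Qf n S U f"
  unfolding Qf_def by (intro sum_nonneg) simp

lemma Qf_mono_U: "Qf n S U f \<le> Qf n S (bitstrings n) f"
  unfolding Qf_def by (intro sum_mono2) auto

lemma Qf_le_norm: "Qf n S U f \<le> (\<Sum>x\<in>S \<inter> bitstrings n. (f x)\<^sup>2)"
  using Qf_mono_U[of n S U f] parseval[of n S f] by simp

lemma opnorm_alt: "opnorm_PHP n S U = Sup {sqrt (Qf n S U f) | f. (\<Sum>x\<in>S \<inter> bitstrings n. (f x)\<^sup>2) \<le> 1}"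
  unfolding opnorm_PHP_def Qf_def ..

lemma spec_le:
  assumes "\<And>f. (\<Sum>x\<in>S \<inter> bitstrings n. (f x)\<^sup>2) \<le> 1 \<Longrightarrow> Qf n S U f \<le> c"
  shows "spec_forr n S U \<le> c"
proof -
  define A where "A = {sqrt (Qf n S U f) | f. (\<Sum>x\<in>S \<inter> bitstrings n. (f x)\<^sup>2) \<le> 1}"
  have z: "0 \<in> A" unfolding A_def
    by (rule CollectI, rule exI[of _ "\<lambda>_. 0"]) (simp add: Qf_def)
  have c0: "0 \<le> c" using assms[of "\<lambda>_. 0"] by (simp add: Qf_def)
  have ub: "a \<le> sqrt c" if "a \<in> A" for a
    using that assms unfolding A_def by auto
  have bdd: "bdd_above A" using ub by (intro bdd_aboveI) blast
  have s1: "Sup A \<le> sqrt c" using z ub by (intro cSup_least) auto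
  have s0: "0 \<le> Sup A" using z bdd by (rule cSup_upper)
  have "(Sup A)\<^sup>2 \<le> (sqrt c)\<^sup>2" by (rule power_mono[OF s1 s0])
  then show ?thesis using c0 unfolding spec_forr_def opnorm_alt A_def[symmetric] by simp
qed

lemma spec_ge:
  assumes "(\<Sum>x\<in>S \<inter> bitstrings n. (f x)\<^sup>2) \<le> 1"
  shows "Qf n S U f \<le> spec_forr n S U"
proof -
  define A where "A = {sqrt (Qf n S U f) | f. (\<Sum>x\<in>S \<inter> bitstrings n. (f x)\<^sup>2) \<le> 1}"
  have ub: "a \<le> 1" if "a \<in> A" for a
  proof -
    from that obtain g where a: "a = sqrt (Qf n S U g)" and g: "(\<Sum>x\<in>S \<inter> bitstrings n. (g x)\<^sup>2) \<le> 1"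
      unfolding A_def by blast
    have "Qf n S U g \<le> 1" using Qf_le_norm[of n S U g] g by linarith
    then show ?thesis unfolding a by simp
  qed
  have bdd: "bdd_above A" using ub by (intro bdd_aboveI) blast
  have m: "sqrt (Qf n S U f) \<in> A" unfolding A_def using assms by blast
  have "sqrt (Qf n S U f) \<le> Sup A" using m bdd by (rule cSup_upper)
  then have "(sqrt (Qf n S U f))\<^sup>2 \<le> (Sup A)\<^sup>2" by (rule power_mono) (simp add: Qf_nonneg)
  then show ?thesis using Qf_nonneg[of n S U f] unfolding spec_forr_def opnorm_alt A_def[symmetric] by simp
qed


lemma exp_bounds:
  fixes x :: real assumes x: "0 \<le> x"
  shows "1 - x \<le> exp (- x)" "exp (- x) \<le> 1 - x + x\<^sup>2 / 2"
proof -
  show "1 - x \<le> exp (- x)" using exp_ge_add_one_self[of "-x"] by simp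
  have e: "1 + x + x\<^sup>2 / 2 \<le> exp x" by (rule exp_lower_Taylor_quadratic[OF x])
  have "0 \<le> x\<^sup>2 / 2" by simp
  then have p: "0 < 1 + x + x\<^sup>2 / 2" using x by linarith
  have "exp (- x) = 1 / exp x" by (simp add: exp_minus field_simps)
  also have "\<dots> \<le> 1 / (1 + x + x\<^sup>2 / 2)" using e p by (intro divide_left_mono) auto
  also have "\<dots> \<le> 1 - x + x\<^sup>2 / 2"
  proof -
    have "(1 - x + x\<^sup>2 / 2) * (1 + x + x\<^sup>2 / 2) = 1 + x ^ 4 / 4"
      by (simp add: algebra_simps power2_eq_square power4_eq_xxxx)
    then have "1 \<le> (1 - x + x\<^sup>2 / 2) * (1 + x + x\<^sup>2 / 2)" by simp
    then show ?thesis using p by (simp add: divide_le_eq)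
  qed
  finally show "exp (- x) \<le> 1 - x + x\<^sup>2 / 2" .
qed

lemma wsq_expand:
  fixes w :: "'b \<Rightarrow> real" and b :: "'b \<Rightarrow> 'a \<Rightarrow> real"
  shows "(\<Sum>y\<in>B. w y * (\<Sum>x\<in>A. b y x)\<^sup>2) = (\<Sum>x\<in>A. \<Sum>x'\<in>A. \<Sum>y\<in>B. w y * b y x * b y x')"
proof -
  have "(\<Sum>y\<in>B. w y * (\<Sum>x\<in>A. b y x)\<^sup>2) = (\<Sum>y\<in>B. \<Sum>x\<in>A. \<Sum>x'\<in>A. w y * b y x * b y x')"
  proof (rule sum.cong[OF refl])
    fix y
    have "(\<Sum>x\<in>A. b y x)\<^sup>2 = (\<Sum>x\<in>A. \<Sum>x'\<in>A. b y x * b y x')"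
      by (simp add: power2_eq_square sum_product)
    then show "w y * (\<Sum>x\<in>A. b y x)\<^sup>2 = (\<Sum>x\<in>A. \<Sum>x'\<in>A. w y * b y x * b y x')"
      by (simp add: sum_distrib_left mult.assoc)
  qed
  also have "\<dots> = (\<Sum>x\<in>A. \<Sum>y\<in>B. \<Sum>x'\<in>A. w y * b y x * b y x')" by (rule sum.swap)
  also have "\<dots> = (\<Sum>x\<in>A. \<Sum>x'\<in>A. \<Sum>y\<in>B. w y * b y x * b y x')"
    by (rule sum.cong[OF refl]) (rule sum.swap)
  finally show ?thesis .
qed

lemma abs_sum_sq: fixes f :: "'a \<Rightarrow> real"
  shows "(\<Sum>x\<in>D. \<Sum>x'\<in>D. \<bar>f x\<bar> * \<bar>f x'\<bar>) = (\<Sum>x\<in>D. \<bar>f x\<bar>)\<^sup>2"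
  by (simp add: power2_eq_square sum_product)

lemma abs_sum_sq_le: fixes f :: "'a \<Rightarrow> real"
  shows "(\<Sum>x\<in>D. \<bar>f x\<bar>)\<^sup>2 \<le> real (card D) * (\<Sum>x\<in>D. (f x)\<^sup>2)"
  using sum_squared_le_sum_of_squares[of "\<lambda>x. \<bar>f x\<bar>" D] by (simp add: mult.commute)

context
  fixes n l :: nat and s :: "nat \<Rightarrow> bool list" and \<kappa> :: real
  assumes l0: "0 < l" and sY: "\<And>i. i < l \<Longrightarrow> s i \<in> bitstrings n"
    and G: "Gen n l s" and k0: "0 \<le> \<kappa>" and k1: "\<kappa> \<le> 1"
begin

definition pp :: "bool list \<Rightarrow> real" where "pp y = 1 - exp (- \<kappa> * gam l s y) / 2"

lemma pp_bounds:
  "pp y \<le> 1/2 + \<kappa> * gam l s y / 2"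
  "1/2 + \<kappa> * gam l s y / 2 - (\<kappa> * gam l s y)\<^sup>2 / 4 \<le> pp y"
proof -
  have x: "0 \<le> \<kappa> * gam l s y" using k0 gam_nonneg[OF l0 sY] by simp
  have e: "exp (- \<kappa> * gam l s y) = exp (- (\<kappa> * gam l s y))" by simp
  show "pp y \<le> 1/2 + \<kappa> * gam l s y / 2"
    using exp_bounds(1)[OF x] unfolding pp_def e by simp
  show "1/2 + \<kappa> * gam l s y / 2 - (\<kappa> * gam l s y)\<^sup>2 / 4 \<le> pp y"
    using exp_bounds(2)[OF x] unfolding pp_def e by simp
qed

definition Ee :: "bool list \<Rightarrow> bool list \<Rightarrow> real" where
  "Ee x x' = (1 / 2 ^ n) * (\<Sum>y\<in>bitstrings n. pp y * chi y x * chi y x')"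

definition Mm :: "bool list set \<Rightarrow> bool list \<Rightarrow> bool list \<Rightarrow> real" where
  "Mm U x x' = (1 / 2 ^ n) * (\<Sum>y\<in>U \<inter> bitstrings n. chi y x * chi y x')"

lemma S_sub: "s ` {..<l} \<subseteq> bitstrings n" using sY by auto

lemma inS: "x \<in> s ` {..<l} \<Longrightarrow> \<exists>i<l. x = s i" by auto

lemma inj_s: "inj_on s {..<l}"
  using Gen_inj[OF l0 sY G] by (auto simp: inj_on_def)

lemma Gf_le_S: "x \<in> s ` {..<l} \<Longrightarrow> x' \<in> s ` {..<l} \<Longrightarrow>
   Gf n l s x x' \<le> (if x = x' then 1 else 0) + 2 / real l"
proof -
  assume "x \<in> s ` {..<l}" "x' \<in> s ` {..<l}"
  then obtain i j where ij: "i < l" "j < l" "x = s i" "x' = s j" by auto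
  have "(x = x') = (i = j)" using ij inj_s unfolding inj_on_def by auto
  then show ?thesis using Gf_le[OF l0 sY G ij(1,2)] ij by simp
qed

lemma Gf_nonneg_S: "x \<in> s ` {..<l} \<Longrightarrow> x' \<in> s ` {..<l} \<Longrightarrow> 0 \<le> Gf n l s x x'"
proof -
  assume "x \<in> s ` {..<l}" "x' \<in> s ` {..<l}"
  then obtain i j where ij: "i < l" "j < l" "x = s i" "x' = s j" by auto
  then show ?thesis using Gf_nonneg[OF l0 sY ij(1,2)] by simp
qed

context
  fixes U :: "bool list set" and \<rho> :: real
  assumes r0: "0 \<le> \<rho>"
    and dev: "\<And>i j. i < l \<Longrightarrow> j < l \<Longrightarrow> \<bar>Mm U (s i) (s j) - Ee (s i) (s j)\<bar> \<le> \<rho> / real l"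
begin

lemma dev_S: "x \<in> s ` {..<l} \<Longrightarrow> x' \<in> s ` {..<l} \<Longrightarrow> \<bar>Mm U x x' - Ee x x'\<bar> \<le> \<rho> / real l"
  using dev by auto

lemma upper:
  fixes v :: nat and \<Delta> :: "bool list set" and f :: "bool list \<Rightarrow> real"
  assumes vl: "v \<le> l" and D: "\<Delta> \<subseteq> s ` {..<l}" and cD: "card \<Delta> \<le> v"
    and f: "(\<Sum>x\<in>\<Delta> \<inter> bitstrings n. (f x)\<^sup>2) \<le> 1"
  shows "Qf n \<Delta> U f \<le> (1 + \<kappa>) / 2 + real v / real l + \<rho>"
proof -
  define D' where "D' = \<Delta> \<inter> bitstrings n"
  have D'eq: "D' = \<Delta>" unfolding D'_def using D S_sub by auto
  have finD: "finite D'" unfolding D'_def by simp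
  have DS: "D' \<subseteq> s ` {..<l}" using D D'eq by simp
  have f': "(\<Sum>x\<in>D'. (f x)\<^sup>2) \<le> 1" using f unfolding D'_def .
  define A where "A = (\<Sum>x\<in>D'. \<bar>f x\<bar>)\<^sup>2"
  have A_le: "A \<le> real v"
  proof -
    have "A \<le> real (card D') * (\<Sum>x\<in>D'. (f x)\<^sup>2)" unfolding A_def by (rule abs_sum_sq_le)
    also have "\<dots> \<le> real (card D') * 1" using f' by (intro mult_left_mono) auto
    also have "\<dots> \<le> real v" using cD D'eq by simp
    finally show ?thesis .
  qed
  have A0: "0 \<le> A" unfolding A_def by simp
  have "Qf n \<Delta> U f = (\<Sum>x\<in>D'. \<Sum>x'\<in>D'. f x * f x' * Mm U x x')"
    unfolding Q_expand Mm_def D'_def ..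
  also have "\<dots> \<le> (\<Sum>x\<in>D'. \<Sum>x'\<in>D'. f x * f x' * Ee x x' + \<bar>f x\<bar> * \<bar>f x'\<bar> * (\<rho> / real l))"
  proof (intro sum_mono)
    fix x x' assume x: "x \<in> D'" and x': "x' \<in> D'"
    have "x \<in> s ` {..<l}" "x' \<in> s ` {..<l}" using x x' DS by (meson subsetD)+
    then have d: "\<bar>Mm U x x' - Ee x x'\<bar> \<le> \<rho> / real l" by (rule dev_S)
    have "f x * f x' * Mm U x x' - f x * f x' * Ee x x' = f x * f x' * (Mm U x x' - Ee x x')"
      by (simp add: algebra_simps)
    also have "\<dots> \<le> \<bar>f x * f x' * (Mm U x x' - Ee x x')\<bar>" by simp
    also have "\<dots> = \<bar>f x\<bar> * \<bar>f x'\<bar> * \<bar>Mm U x x' - Ee x x'\<bar>" by (simp add: abs_mult)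
    also have "\<dots> \<le> \<bar>f x\<bar> * \<bar>f x'\<bar> * (\<rho> / real l)" using d by (intro mult_left_mono) auto
    finally show "f x * f x' * Mm U x x' \<le> f x * f x' * Ee x x' + \<bar>f x\<bar> * \<bar>f x'\<bar> * (\<rho> / real l)"
      by simp
  qed
  also have "\<dots> = (\<Sum>x\<in>D'. \<Sum>x'\<in>D'. f x * f x' * Ee x x') + A * (\<rho> / real l)"
    unfolding A_def abs_sum_sq[symmetric] by (simp add: sum.distrib sum_distrib_right sum_divide_distrib)
  finally have st1: "Qf n \<Delta> U f \<le> (\<Sum>x\<in>D'. \<Sum>x'\<in>D'. f x * f x' * Ee x x') + A * (\<rho> / real l)" .
  define F where "F y = (\<Sum>x\<in>D'. chi y x * f x)" for y
  have wexp: "(\<Sum>y\<in>bitstrings n. w y * (F y)\<^sup>2) = (\<Sum>x\<in>D'. \<Sum>x'\<in>D'. f x * f x' * (\<Sum>y\<in>bitstrings n. w y * chi y x * chi y x'))" for w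
    unfolding F_def wsq_expand
    by (intro sum.cong refl) (simp add: sum_distrib_left mult_ac)
  have "(\<Sum>x\<in>D'. \<Sum>x'\<in>D'. f x * f x' * Ee x x') = (1 / 2 ^ n) * (\<Sum>y\<in>bitstrings n. pp y * (F y)\<^sup>2)"
    unfolding wexp Ee_def by (simp add: sum_distrib_left mult_ac)
  also have "\<dots> \<le> (1 / 2 ^ n) * (\<Sum>y\<in>bitstrings n. (1/2 + \<kappa> * gam l s y / 2) * (F y)\<^sup>2)"
    by (intro mult_left_mono sum_mono) (auto intro: mult_right_mono pp_bounds(1))
  also have "\<dots> = (1/2) * ((1 / 2 ^ n) * (\<Sum>y\<in>bitstrings n. 1 * (F y)\<^sup>2)) +
       (\<kappa>/2) * ((1 / 2 ^ n) * (\<Sum>y\<in>bitstrings n. gam l s y * (F y)\<^sup>2))"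
    by (simp add: sum.distrib sum_distrib_left algebra_simps)
  finally have st2: "(\<Sum>x\<in>D'. \<Sum>x'\<in>D'. f x * f x' * Ee x x') \<le> (1/2) * ((1 / 2 ^ n) * (\<Sum>y\<in>bitstrings n. 1 * (F y)\<^sup>2)) +
       (\<kappa>/2) * ((1 / 2 ^ n) * (\<Sum>y\<in>bitstrings n. gam l s y * (F y)\<^sup>2))" .
  have p1: "(1 / 2 ^ n) * (\<Sum>y\<in>bitstrings n. 1 * (F y)\<^sup>2) \<le> 1"
  proof -
    have "(1 / 2 ^ n) * (\<Sum>y\<in>bitstrings n. 1 * (F y)\<^sup>2) = (\<Sum>x\<in>D'. \<Sum>x'\<in>D'. f x * f x' * ((1 / 2 ^ n) * (\<Sum>y\<in>bitstrings n \<inter> bitstrings n. chi y x * chi y x')))"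
      unfolding wexp by (simp add: sum_distrib_left mult_ac)
    also have "\<dots> = Qf n \<Delta> (bitstrings n) f" unfolding Q_expand D'_def ..
    also have "\<dots> = (\<Sum>x\<in>D'. (f x)\<^sup>2)" unfolding parseval D'_def ..
    finally show ?thesis using f' by simp
  qed
  have p2: "(1 / 2 ^ n) * (\<Sum>y\<in>bitstrings n. gam l s y * (F y)\<^sup>2) \<le> 1 + 2 / real l * A"
  proof -
    have "(1 / 2 ^ n) * (\<Sum>y\<in>bitstrings n. gam l s y * (F y)\<^sup>2) = (\<Sum>x\<in>D'. \<Sum>x'\<in>D'. f x * f x' * Gf n l s x x')"
    proof -
      have gd: "Gf n l s x x' = (1 / 2 ^ n) * (\<Sum>y\<in>bitstrings n. gam l s y * chi y x * chi y x')" for x x'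
        by (simp add: Gf_def[OF l0 sY])
      show ?thesis unfolding wexp gd by (simp add: sum_distrib_left mult_ac)
    qed
    also have "\<dots> \<le> (\<Sum>x\<in>D'. \<Sum>x'\<in>D'. \<bar>f x\<bar> * \<bar>f x'\<bar> * ((if x = x' then 1 else 0) + 2 / real l))"
    proof (intro sum_mono)
      fix x x' assume x: "x \<in> D'" and x': "x' \<in> D'"
      have xs: "x \<in> s ` {..<l}" "x' \<in> s ` {..<l}" using x x' DS by (meson subsetD)+
      have g0: "0 \<le> Gf n l s x x'" using Gf_nonneg_S[OF xs] .
      have g1: "Gf n l s x x' \<le> (if x = x' then 1 else 0) + 2 / real l" using Gf_le_S[OF xs] .
      have "f x * f x' * Gf n l s x x' \<le> \<bar>f x * f x' * Gf n l s x x'\<bar>" by simp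
      also have "\<dots> = \<bar>f x\<bar> * \<bar>f x'\<bar> * Gf n l s x x'" using g0 by (simp add: abs_mult)
      also have "\<dots> \<le> \<bar>f x\<bar> * \<bar>f x'\<bar> * ((if x = x' then 1 else 0) + 2 / real l)"
        using g1 by (intro mult_left_mono) auto
      finally show "f x * f x' * Gf n l s x x' \<le> \<bar>f x\<bar> * \<bar>f x'\<bar> * ((if x = x' then 1 else 0) + 2 / real l)" .
    qed
    also have "\<dots> = (\<Sum>x\<in>D'. \<Sum>x'\<in>D'. (if x' = x then \<bar>f x\<bar> * \<bar>f x\<bar> else 0)) + 2 / real l * A"
    proof -
      have t: "\<bar>f x\<bar> * \<bar>f x'\<bar> * ((if x = x' then 1 else 0) + 2 / real l) =
          (if x' = x then \<bar>f x\<bar> * \<bar>f x\<bar> else 0) + 2 / real l * (\<bar>f x\<bar> * \<bar>f x'\<bar>)" for x x'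
        by (cases "x = x'") (simp_all add: algebra_simps)
      show ?thesis unfolding t A_def abs_sum_sq[symmetric] by (simp add: sum.distrib sum_distrib_left)
    qed
    also have "(\<Sum>x\<in>D'. \<Sum>x'\<in>D'. (if x' = x then \<bar>f x\<bar> * \<bar>f x\<bar> else 0)) = (\<Sum>x\<in>D'. (f x)\<^sup>2)"
      using finD by (simp add: sum.delta power2_eq_square)
    finally show ?thesis using f' by simp
  qed
  have "Qf n \<Delta> U f \<le> (1/2) * 1 + (\<kappa>/2) * (1 + 2 / real l * A) + A * (\<rho> / real l)"
  proof -
    have "(1/2) * ((1 / 2 ^ n) * (\<Sum>y\<in>bitstrings n. 1 * (F y)\<^sup>2)) \<le> (1/2) * 1"
      using p1 by simp
    moreover have "(\<kappa>/2) * ((1 / 2 ^ n) * (\<Sum>y\<in>bitstrings n. gam l s y * (F y)\<^sup>2)) \<le> (\<kappa>/2) * (1 + 2 / real l * A)"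
      using p2 k0 by (intro mult_left_mono) auto
    ultimately show ?thesis using st1 st2 by linarith
  qed
  also have "\<dots> = 1/2 + \<kappa>/2 + \<kappa> * (A / real l) + \<rho> * (A / real l)" by (simp add: field_simps)
  also have "\<dots> \<le> 1/2 + \<kappa>/2 + 1 * (real v / real l) + \<rho> * 1"
  proof -
    have a1: "A / real l \<le> real v / real l" using A_le l0 by (intro divide_right_mono) auto
    have a2: "real v / real l \<le> 1" using vl l0 by simp
    have a0: "0 \<le> A / real l" using A0 by simp
    have "\<kappa> * (A / real l) \<le> 1 * (real v / real l)" using a1 a0 k0 k1 by (intro mult_mono) auto
    moreover have "\<rho> * (A / real l) \<le> \<rho> * 1" using a1 a2 r0 by (intro mult_left_mono) auto
    ultimately show ?thesis by linarith
  qed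
  also have "\<dots> = (1 + \<kappa>) / 2 + real v / real l + \<rho>" by simp
  finally show ?thesis .
qed

lemma lower:
  shows "(1 + 3 * \<kappa>) / 2 - 15 * \<kappa>\<^sup>2 / 4 - 5 * \<kappa> / real l - \<rho> \<le> spec_forr n (s ` {..<l}) U"
proof -
  define S where "S = s ` {..<l}"
  have SY: "S \<inter> bitstrings n = S" unfolding S_def using S_sub by auto
  have cS: "card S = l" unfolding S_def using inj_s by (simp add: card_image)
  define f0 :: "bool list \<Rightarrow> real" where "f0 = (\<lambda>_. 1 / sqrt (real l))"
  have ff: "f0 x * f0 x' = 1 / real l" for x x' unfolding f0_def using l0 by (simp add: real_sqrt_mult[symmetric])
  have nf: "(\<Sum>x\<in>S \<inter> bitstrings n. (f0 x)\<^sup>2) \<le> 1"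
    unfolding SY power2_eq_square ff using cS l0 by simp
  have "Qf n S U f0 = (\<Sum>x\<in>S. \<Sum>x'\<in>S. (1 / real l) * Mm U x x')"
    unfolding Q_expand SY Mm_def ff ..
  also have "\<dots> = (\<Sum>i<l. \<Sum>j<l. (1 / real l) * Mm U (s i) (s j))"
    unfolding S_def by (simp add: sum.reindex[OF inj_s])
  also have "\<dots> \<ge> (\<Sum>i<l. \<Sum>j<l. (1 / real l) * (Ee (s i) (s j) - \<rho> / real l))"
  proof (intro sum_mono)
    fix i j assume "i \<in> {..<l}" "j \<in> {..<l}"
    then have "\<bar>Mm U (s i) (s j) - Ee (s i) (s j)\<bar> \<le> \<rho> / real l" using dev by auto
    then show "(1 / real l) * (Ee (s i) (s j) - \<rho> / real l) \<le> (1 / real l) * Mm U (s i) (s j)"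
      by (intro mult_left_mono) auto
  qed
  finally have q1: "(\<Sum>i<l. \<Sum>j<l. (1 / real l) * (Ee (s i) (s j) - \<rho> / real l)) \<le> Qf n S U f0" .
  have q2: "(\<Sum>i<l. \<Sum>j<l. (1 / real l) * (Ee (s i) (s j) - \<rho> / real l)) =
     (1 / real l) * (\<Sum>i<l. \<Sum>j<l. Ee (s i) (s j)) - \<rho>"
    using l0 by (simp add: sum_subtractf sum_distrib_left right_diff_distrib)
  have gd: "gam l s y = (\<Sum>i<l. \<Sum>j<l. chi y (s i) * chi y (s j)) / real l" for y
    by (simp add: gam_def[OF l0 sY] sig_def[OF l0 sY] power2_eq_square sum_product)
  have q3: "(1 / real l) * (\<Sum>i<l. \<Sum>j<l. Ee (s i) (s j)) = (1 / 2 ^ n) * (\<Sum>y\<in>bitstrings n. pp y * gam l s y)"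
  proof -
    have "(\<Sum>i<l. \<Sum>j<l. Ee (s i) (s j)) = (1 / 2 ^ n) * (\<Sum>i<l. \<Sum>j<l. \<Sum>y\<in>bitstrings n. pp y * chi y (s i) * chi y (s j))"
      unfolding Ee_def by (simp add: sum_distrib_left)
    also have "(\<Sum>i<l. \<Sum>j<l. \<Sum>y\<in>bitstrings n. pp y * chi y (s i) * chi y (s j)) =
        (\<Sum>y\<in>bitstrings n. pp y * (\<Sum>i<l. \<Sum>j<l. chi y (s i) * chi y (s j)))"
    proof -
      have "(\<Sum>i<l. \<Sum>j<l. \<Sum>y\<in>bitstrings n. pp y * chi y (s i) * chi y (s j)) =
          (\<Sum>i<l. \<Sum>y\<in>bitstrings n. \<Sum>j<l. pp y * chi y (s i) * chi y (s j))"
        by (rule sum.cong[OF refl]) (rule sum.swap)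
      also have "\<dots> = (\<Sum>y\<in>bitstrings n. \<Sum>i<l. \<Sum>j<l. pp y * chi y (s i) * chi y (s j))"
        by (rule sum.swap)
      also have "\<dots> = (\<Sum>y\<in>bitstrings n. pp y * (\<Sum>i<l. \<Sum>j<l. chi y (s i) * chi y (s j)))"
        by (simp add: sum_distrib_left mult.assoc)
      finally show ?thesis .
    qed
    finally show ?thesis unfolding gd using l0 by (simp add: sum_distrib_left sum_divide_distrib field_simps)
  qed
  have q4: "(1 / 2 ^ n) * (\<Sum>y\<in>bitstrings n. pp y * gam l s y) \<ge>
      (1/2) * ((1 / 2 ^ n) * (\<Sum>y\<in>bitstrings n. gam l s y)) + (\<kappa>/2) * ((1 / 2 ^ n) * (\<Sum>y\<in>bitstrings n. (gam l s y)\<^sup>2))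
      - (\<kappa>\<^sup>2/4) * ((1 / 2 ^ n) * (\<Sum>y\<in>bitstrings n. gam l s y ^ 3))"
  proof -
    have "gam l s y / 2 + \<kappa> / 2 * (gam l s y)\<^sup>2 - \<kappa>\<^sup>2 / 4 * gam l s y ^ 3 \<le> pp y * gam l s y" for y
    proof -
      have g: "0 \<le> gam l s y" by (rule gam_nonneg[OF l0 sY])
      have "(1/2 + \<kappa> * gam l s y / 2 - (\<kappa> * gam l s y)\<^sup>2 / 4) * gam l s y \<le> pp y * gam l s y"
        using pp_bounds(2)[of y] g by (rule mult_right_mono)
      moreover have "(1/2 + \<kappa> * gam l s y / 2 - (\<kappa> * gam l s y)\<^sup>2 / 4) * gam l s y =
         gam l s y / 2 + \<kappa> / 2 * (gam l s y)\<^sup>2 - \<kappa>\<^sup>2 / 4 * gam l s y ^ 3"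
        by (simp add: algebra_simps power2_eq_square power3_eq_cube)
      ultimately show ?thesis by simp
    qed
    then have "(\<Sum>y\<in>bitstrings n. gam l s y / 2 + \<kappa> / 2 * (gam l s y)\<^sup>2 - \<kappa>\<^sup>2 / 4 * gam l s y ^ 3)
        \<le> (\<Sum>y\<in>bitstrings n. pp y * gam l s y)" by (intro sum_mono)
    then have "(1 / 2 ^ n) * (\<Sum>y\<in>bitstrings n. gam l s y / 2 + \<kappa> / 2 * (gam l s y)\<^sup>2 - \<kappa>\<^sup>2 / 4 * gam l s y ^ 3)
        \<le> (1 / 2 ^ n) * (\<Sum>y\<in>bitstrings n. pp y * gam l s y)" by (intro mult_left_mono) auto
    moreover have "(1 / 2 ^ n) * (\<Sum>y\<in>bitstrings n. gam l s y / 2 + \<kappa> / 2 * (gam l s y)\<^sup>2 - \<kappa>\<^sup>2 / 4 * gam l s y ^ 3) =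
      (1/2) * ((1 / 2 ^ n) * (\<Sum>y\<in>bitstrings n. gam l s y)) + (\<kappa>/2) * ((1 / 2 ^ n) * (\<Sum>y\<in>bitstrings n. (gam l s y)\<^sup>2))
      - (\<kappa>\<^sup>2/4) * ((1 / 2 ^ n) * (\<Sum>y\<in>bitstrings n. gam l s y ^ 3))"
      by (simp add: sum.distrib sum_subtractf sum_distrib_left sum_divide_distrib algebra_simps)
    ultimately show ?thesis by linarith
  qed
  have m1: "1 \<le> (1 / 2 ^ n) * (\<Sum>y\<in>bitstrings n. gam l s y)" by (rule mom1[OF l0 sY])
  have m2: "3 - 2 / real l \<le> (1 / 2 ^ n) * (\<Sum>y\<in>bitstrings n. (gam l s y)\<^sup>2)" by (rule mom2[OF l0 sY])
  have m3: "(1 / 2 ^ n) * (\<Sum>y\<in>bitstrings n. gam l s y ^ 3) \<le> 15" by (rule mom3[OF l0 sY G])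
  have k2: "0 \<le> \<kappa>\<^sup>2 / 4" by simp
  have "(1/2) * 1 + (\<kappa>/2) * (3 - 2 / real l) - (\<kappa>\<^sup>2/4) * 15 \<le>
      (1/2) * ((1 / 2 ^ n) * (\<Sum>y\<in>bitstrings n. gam l s y)) + (\<kappa>/2) * ((1 / 2 ^ n) * (\<Sum>y\<in>bitstrings n. (gam l s y)\<^sup>2))
      - (\<kappa>\<^sup>2/4) * ((1 / 2 ^ n) * (\<Sum>y\<in>bitstrings n. gam l s y ^ 3))"
  proof -
    have "(\<kappa>/2) * (3 - 2 / real l) \<le> (\<kappa>/2) * ((1 / 2 ^ n) * (\<Sum>y\<in>bitstrings n. (gam l s y)\<^sup>2))"
      using m2 k0 by (intro mult_left_mono) auto
    moreover have "(\<kappa>\<^sup>2/4) * ((1 / 2 ^ n) * (\<Sum>y\<in>bitstrings n. gam l s y ^ 3)) \<le> (\<kappa>\<^sup>2/4) * 15"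
      using m3 k2 by (intro mult_left_mono) auto
    ultimately show ?thesis using m1 by linarith
  qed
  moreover have "(1 + 3 * \<kappa>) / 2 - 15 * \<kappa>\<^sup>2 / 4 - 5 * \<kappa> / real l \<le> (1/2) * 1 + (\<kappa>/2) * (3 - 2 / real l) - (\<kappa>\<^sup>2/4) * 15"
  proof -
    have "\<kappa> / real l \<le> 5 * \<kappa> / real l" using k0 l0 by (simp add: divide_right_mono)
    then show ?thesis by (simp add: field_simps)
  qed
  ultimately have "(1 + 3 * \<kappa>) / 2 - 15 * \<kappa>\<^sup>2 / 4 - 5 * \<kappa> / real l - \<rho> \<le> Qf n S U f0"
    using q1 q2 q3 q4 by linarith
  also have "\<dots> \<le> spec_forr n S U" by (rule spec_ge[OF nf])
  finally show ?thesis unfolding S_def .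
qed

end

end


lemma prob_bind_le:
  fixes M :: "'a pmf" and F :: "'a \<Rightarrow> 'b pmf"
  assumes h: "\<And>x. x \<in> set_pmf M \<Longrightarrow> x \<notin> B \<Longrightarrow> measure_pmf.prob (F x) E \<le> \<beta>" and b0: "0 \<le> \<beta>"
  shows "measure_pmf.prob (bind_pmf M F) E \<le> measure_pmf.prob M B + \<beta>"
proof -
  have "ennreal (measure_pmf.prob (bind_pmf M F) E) = emeasure (bind_pmf M F) E"
    by (simp add: measure_pmf.emeasure_eq_measure)
  also have "\<dots> = (\<integral>\<^sup>+x. emeasure (F x) E \<partial>M)" by simp
  also have "\<dots> \<le> (\<integral>\<^sup>+x. (indicator B x + ennreal \<beta>) \<partial>M)"
  proof (intro nn_integral_mono_AE AE_pmfI)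
    fix x assume x: "x \<in> set_pmf M"
    show "emeasure (F x) E \<le> indicator B x + ennreal \<beta>"
    proof (cases "x \<in> B")
      case True
      have "emeasure (F x) E \<le> 1" by (simp add: measure_pmf.emeasure_le_1)
      then show ?thesis using True by (simp add: add_increasing2)
    next
      case False
      have "emeasure (F x) E = ennreal (measure_pmf.prob (F x) E)" by (simp add: measure_pmf.emeasure_eq_measure)
      also have "\<dots> \<le> ennreal \<beta>" using h[OF x False] by (simp add: ennreal_leI)
      finally show ?thesis using False by simp
    qed
  qed
  also have "\<dots> = emeasure M B + ennreal \<beta>"
    by (subst nn_integral_add) (auto simp: measure_pmf.emeasure_space_1)
  also have "\<dots> = ennreal (measure_pmf.prob M B + \<beta>)"
    by (simp add: measure_pmf.emeasure_eq_measure ennreal_plus b0)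
  finally have "ennreal (measure_pmf.prob (bind_pmf M F) E) \<le> ennreal (measure_pmf.prob M B + \<beta>)" .
  moreover have "0 \<le> measure_pmf.prob M B + \<beta>" using b0 by simp
  ultimately show ?thesis using ennreal_le_iff by blast
qed

lemma prob_bind_le':
  fixes M :: "'a pmf" and F :: "'a \<Rightarrow> 'b pmf"
  assumes h: "\<And>x. x \<in> set_pmf M \<Longrightarrow> measure_pmf.prob (F x) E \<le> \<beta>" and b0: "0 \<le> \<beta>"
  shows "measure_pmf.prob (bind_pmf M F) E \<le> \<beta>"
  using prob_bind_le[of M "{}" F E \<beta>] h b0 by simp

lemma prob_union_le:
  fixes M :: "'a pmf"
  assumes "finite I" "\<And>i. i \<in> I \<Longrightarrow> measure_pmf.prob M (A i) \<le> c"
  shows "measure_pmf.prob M (\<Union>i\<in>I. A i) \<le> real (card I) * c"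
proof -
  have "measure_pmf.prob M (\<Union>i\<in>I. A i) \<le> (\<Sum>i\<in>I. measure_pmf.prob M (A i))"
    by (rule measure_pmf.finite_measure_subadditive_finite) (use assms in auto)
  also have "\<dots> \<le> (\<Sum>i\<in>I. c)" by (rule sum_mono) (rule assms(2))
  finally show ?thesis by simp
qed

lemma bitstrings_ne: "bitstrings n \<noteq> {}"
  unfolding bitstrings_def by (metis (mono_tags) empty_iff length_replicate mem_Collect_eq)

lemma zeros_in: "replicate n False \<in> bitstrings n" by (simp add: bitstrings_def)

lemma sum_cc_update:
  assumes k: "odd (count_list t k)" and fY: "\<And>i. i \<in> set t \<Longrightarrow> i \<noteq> k \<Longrightarrow> f i \<in> bitstrings n"
  shows "(\<Sum>y\<in>bitstrings n. cc n (f(k := y)) t) = 1"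
proof -
  define R where "R z = prod_list (map (\<lambda>i. chi z (f i)) (filter (\<lambda>i. i \<noteq> k) t))" for z
  have p: "prod_list (map (\<lambda>i. chi z ((f(k := y)) i)) t) = chi z y * R z" for z y
  proof -
    have "prod_list (map (\<lambda>i. chi z ((f(k := y)) i)) t) =
       chi z y ^ count_list t k * prod_list (map (\<lambda>i. chi z ((f(k := y)) i)) (filter (\<lambda>i. i \<noteq> k) t))"
      using prod_list_split[of "\<lambda>i. chi z ((f(k := y)) i)" t k] by simp
    also have "map (\<lambda>i. chi z ((f(k := y)) i)) (filter (\<lambda>i. i \<noteq> k) t) = map (\<lambda>i. chi z (f i)) (filter (\<lambda>i. i \<noteq> k) t)"
      by (rule map_cong) auto
    finally show ?thesis using k unfolding R_def by (simp add: chi_pow)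
  qed
  have "(\<Sum>y\<in>bitstrings n. cc n (f(k := y)) t) = (1 / 2 ^ n) * (\<Sum>y\<in>bitstrings n. \<Sum>z\<in>bitstrings n. chi z y * R z)"
    unfolding cc_def p by (simp add: sum_distrib_left)
  also have "(\<Sum>y\<in>bitstrings n. \<Sum>z\<in>bitstrings n. chi z y * R z) = (\<Sum>z\<in>bitstrings n. R z * (\<Sum>y\<in>bitstrings n. chi z y))"
    by (subst sum.swap) (simp add: sum_distrib_left mult.commute)
  also have "\<dots> = (\<Sum>z\<in>bitstrings n. (if z = replicate n False then R z * 2 ^ n else 0))"
    by (rule sum.cong[OF refl]) (simp add: chi_sum')
  also have "\<dots> = R (replicate n False) * 2 ^ n" using zeros_in[of n] by (simp add: sum.delta')
  also have "R (replicate n False) = 1" unfolding R_def by (induction t) auto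
  finally show ?thesis by (simp add: fun_upd_def)
qed

lemma card_cc_update:
  assumes k: "odd (count_list t k)" and fY: "\<And>i. i \<in> set t \<Longrightarrow> i \<noteq> k \<Longrightarrow> f i \<in> bitstrings n"
  shows "card {y\<in>bitstrings n. cc n (f(k := y)) t \<noteq> 0} \<le> 1"
proof -
  have v: "cc n (f(k := y)) t = 0 \<or> cc n (f(k := y)) t = 1" if "y \<in> bitstrings n" for y
    by (rule cc_01) (use fY that in auto)
  have "real (card {y\<in>bitstrings n. cc n (f(k := y)) t \<noteq> 0}) = (\<Sum>y\<in>{y\<in>bitstrings n. cc n (f(k := y)) t \<noteq> 0}. 1)"
    by simp
  also have "\<dots> = (\<Sum>y\<in>{y\<in>bitstrings n. cc n (f(k := y)) t \<noteq> 0}. cc n (f(k := y)) t)"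
    by (rule sum.cong[OF refl]) (use v in force)
  also have "\<dots> = (\<Sum>y\<in>bitstrings n. cc n (f(k := y)) t)"
    by (rule sum.mono_neutral_left) auto
  also have "\<dots> = 1" by (rule sum_cc_update[OF k fY])
  finally show ?thesis by simp
qed

definition PS :: "nat \<Rightarrow> nat \<Rightarrow> (nat \<Rightarrow> bool list) pmf" where
  "PS n l = Pi_pmf {..<l} [] (\<lambda>_. pmf_of_set (bitstrings n))"

lemma set_PS: "s \<in> set_pmf (PS n l) \<Longrightarrow> i < l \<Longrightarrow> s i \<in> bitstrings n"
  unfolding PS_def using bitstrings_ne[of n]
  by (auto simp: set_Pi_pmf PiE_dflt_def)

lemma prob_cc_bad:
  assumes t: "t \<in> LL l 6" and ne: "\<not> evl t"
  shows "measure_pmf.prob (PS n l) {s. cc n s t \<noteq> 0} \<le> 1 / 2 ^ n"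
proof -
  obtain k where k: "odd (count_list t k)" using ne unfolding evl_def by blast
  then have "k \<in> set t" by (metis count_notin even_zero)
  then have kl: "k < l" using t unfolding LL_def by auto
  define A' where "A' = {..<l} - {k}"
  have A: "{..<l} = insert k A'" "k \<notin> A'" "finite A'" unfolding A'_def using kl by auto
  define p where "p = (\<lambda>_::nat. pmf_of_set (bitstrings n))"
  have "PS n l = do {y \<leftarrow> p k; f \<leftarrow> Pi_pmf A' [] p; return_pmf (f(k := y))}"
    unfolding PS_def p_def[symmetric] A(1) by (rule Pi_pmf_insert'[OF A(3) A(2)])
  also have "\<dots> = do {f \<leftarrow> Pi_pmf A' [] p; y \<leftarrow> p k; return_pmf (f(k := y))}"
    by (rule bind_commute_pmf)
  finally have PSe: "PS n l = do {f \<leftarrow> Pi_pmf A' [] p; y \<leftarrow> p k; return_pmf (f(k := y))}" .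
  show ?thesis unfolding PSe
  proof (rule prob_bind_le')
    fix f assume f: "f \<in> set_pmf (Pi_pmf A' [] p)"
    have fY: "f i \<in> bitstrings n" if "i \<in> set t" "i \<noteq> k" for i
    proof -
      have "i \<in> A'" using that t unfolding LL_def A'_def by auto
      then show ?thesis using f A(3) bitstrings_ne[of n] unfolding p_def
        by (auto simp: set_Pi_pmf PiE_dflt_def)
    qed
    have "measure_pmf.prob (p k \<bind> (\<lambda>y. return_pmf (f(k := y)))) {s. cc n s t \<noteq> 0}
        = measure_pmf.prob (map_pmf (\<lambda>y. f(k := y)) (p k)) {s. cc n s t \<noteq> 0}"
      by (simp add: map_pmf_def)
    also have "\<dots> = measure_pmf.prob (pmf_of_set (bitstrings n)) {y. cc n (f(k := y)) t \<noteq> 0}"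
      unfolding p_def by (simp add: vimage_def)
    also have "\<dots> = card (bitstrings n \<inter> {y. cc n (f(k := y)) t \<noteq> 0}) / card (bitstrings n)"
      using bitstrings_ne[of n] by (simp add: measure_pmf_of_set)
    also have "\<dots> \<le> 1 / 2 ^ n"
    proof -
      have "card (bitstrings n \<inter> {y. cc n (f(k := y)) t \<noteq> 0}) \<le> 1"
        using card_cc_update[OF k fY] by (simp add: Int_def)
      then show ?thesis by (simp add: card_bitstrings divide_right_mono)
    qed
    finally show "measure_pmf.prob (p k \<bind> (\<lambda>y. return_pmf (f(k := y)))) {s. cc n s t \<noteq> 0} \<le> 1 / 2 ^ n" .
  qed simp
qed

lemma prob_not_Gen:
  "measure_pmf.prob (PS n l) {s. \<not> Gen n l s} \<le> real l ^ 6 / 2 ^ n"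
proof -
  define I where "I = {t\<in>LL l 6. \<not> evl t}"
  have "{s. \<not> Gen n l s} = (\<Union>t\<in>I. {s. cc n s t \<noteq> 0})"
    unfolding Gen_def I_def by auto
  then have "measure_pmf.prob (PS n l) {s. \<not> Gen n l s} \<le> real (card I) * (1 / 2 ^ n)"
    by (simp only:) (rule prob_union_le, simp add: I_def, rule prob_cc_bad, auto simp: I_def)
  also have "\<dots> \<le> real l ^ 6 * (1 / 2 ^ n)"
  proof -
    have "card I \<le> card (LL l 6)" unfolding I_def by (intro card_mono) auto
    then have "real (card I) \<le> real l ^ 6" using card_LL[of l 6] by (metis of_nat_le_iff of_nat_power)
    then show ?thesis by (intro mult_right_mono) auto
  qed
  finally show ?thesis by simp
qed


lemma hoeff_entry:
  fixes Y :: "'a set" and q w :: "'a \<Rightarrow> real" and \<epsilon> :: real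
  assumes fin: "finite Y" and q: "\<And>y. y \<in> Y \<Longrightarrow> 0 \<le> q y \<and> q y \<le> 1"
    and e: "0 \<le> \<epsilon>" and pos: "0 < (\<Sum>y\<in>Y. (w y)\<^sup>2)"
  shows "measure_pmf.prob (Pi_pmf Y False (\<lambda>y. bernoulli_pmf (q y)))
     {g. \<epsilon> \<le> \<bar>(\<Sum>y\<in>Y. if g y then w y else 0) - (\<Sum>y\<in>Y. q y * w y)\<bar>}
     \<le> 2 * exp (-2 * \<epsilon>\<^sup>2 / (\<Sum>y\<in>Y. (w y)\<^sup>2))"
proof -
  define P where "P = Pi_pmf Y False (\<lambda>y. bernoulli_pmf (q y))"
  define X where "X = (\<lambda>y (g::'a \<Rightarrow> bool). if g y then w y else 0)"
  have ex: "measure_pmf.expectation P (X y) = q y * w y" if y: "y \<in> Y" for y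
  proof -
    have "measure_pmf.expectation P (X y) = measure_pmf.expectation (map_pmf (\<lambda>g. g y) P) (\<lambda>b. if b then w y else 0)"
      unfolding X_def by simp
    also have "map_pmf (\<lambda>g. g y) P = bernoulli_pmf (q y)"
      unfolding P_def using fin y by (simp add: Pi_pmf_component)
    finally show ?thesis using q[OF y] by simp
  qed
  interpret H: Hoeffding_ineq "measure_pmf P" Y X "\<lambda>y. min 0 (w y)" "\<lambda>y. max 0 (w y)"
    "\<Sum>y\<in>Y. measure_pmf.expectation P (X y)"
  proof unfold_locales
    show "finite Y" by (rule fin)
    have "prob_space.indep_vars (measure_pmf P) (\<lambda>_. count_space UNIV) (\<lambda>x f. f x) Y"
      unfolding P_def by (rule indep_vars_Pi_pmf[OF fin])
    then have "prob_space.indep_vars (measure_pmf P) (\<lambda>_. borel) (\<lambda>y g. (\<lambda>b. if b then w y else 0) (g y)) Y"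
      by (rule prob_space.indep_vars_compose2[OF prob_space_measure_pmf]) auto
    then show "prob_space.indep_vars (measure_pmf P) (\<lambda>_. borel) X Y" unfolding X_def .
  next
    fix y assume "y \<in> Y"
    show "AE x in measure_pmf P. X y x \<in> {min 0 (w y)..max 0 (w y)}"
      unfolding X_def by (intro AE_pmfI) auto
  qed simp
  have ba: "(max 0 (w y) - min 0 (w y))\<^sup>2 = (w y)\<^sup>2" for y
    by (cases "0 \<le> w y") (auto simp: max_def min_def)
  have "measure_pmf.prob P {x \<in> space (measure_pmf P). \<epsilon> \<le> \<bar>(\<Sum>y\<in>Y. X y x) - (\<Sum>y\<in>Y. measure_pmf.expectation P (X y))\<bar>}
      \<le> 2 * exp (-2 * \<epsilon>\<^sup>2 / (\<Sum>y\<in>Y. (max 0 (w y) - min 0 (w y))\<^sup>2))"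
    by (rule H.Hoeffding_ineq_abs_ge[OF e]) (simp add: ba pos)
  moreover have "(\<Sum>y\<in>Y. measure_pmf.expectation P (X y)) = (\<Sum>y\<in>Y. q y * w y)"
    by (rule sum.cong[OF refl]) (rule ex)
  ultimately show ?thesis unfolding P_def[symmetric] X_def ba by simp
qed


lemma inner_bound:
  fixes n l v :: nat and \<kappa> \<rho> t1 t2 :: real and s :: "nat \<Rightarrow> bool list"
  assumes l0: "0 < l" and sY: "\<And>i. i < l \<Longrightarrow> s i \<in> bitstrings n" and G: "Gen n l s"
    and k0: "0 \<le> \<kappa>" and k1: "\<kappa> \<le> 1" and r0: "0 \<le> \<rho>" and vl: "v \<le> l"
    and t1: "t1 = (1 + \<kappa>) / 2 + real v / real l + \<rho>"
    and t2: "t2 = (1 + 3 * \<kappa>) / 2 - 15 * \<kappa>\<^sup>2 / 4 - 5 * \<kappa> / real l - \<rho>"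
  shows "measure_pmf.prob (Pi_pmf (bitstrings n) False (\<lambda>y. bernoulli_pmf (1 - exp (- \<kappa> * gamma l s y) / 2))
           \<bind> (\<lambda>g. return_pmf (s ` {..<l}, {y \<in> bitstrings n. g y})))
           {(S, U). \<not> strong_yes_instance n t1 t2 v S U}
         \<le> real l * real l * (2 * exp (-2 * (\<rho> / real l)\<^sup>2 * 2 ^ n))"
proof -
  define q where "q y = 1 - exp (- \<kappa> * gamma l s y) / 2" for y
  have qpp: "q y = pp l s \<kappa> y" for y
    by (simp add: q_def pp_def[OF l0 sY G k0 k1] gamma_eq[OF l0 sY])
  have q01: "0 \<le> q y \<and> q y \<le> 1" for y
  proof -
    have "0 \<le> \<kappa> * gam l s y" using k0 gam_nonneg[OF l0 sY] by simp
    then have "exp (- (\<kappa> * gam l s y)) \<le> 1" by simp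
    moreover have "0 < exp (- (\<kappa> * gam l s y))" by simp
    moreover have "q y = 1 - exp (- (\<kappa> * gam l s y)) / 2" by (simp add: q_def gamma_eq[OF l0 sY])
    ultimately show ?thesis by linarith
  qed
  define w where "w i j y = chi y (s i) * chi y (s j) / 2 ^ n" for i j y
  define PU where "PU = Pi_pmf (bitstrings n) False (\<lambda>y. bernoulli_pmf (q y))"
  define Bad where "Bad p = {g. \<rho> / real l \<le> \<bar>(\<Sum>y\<in>bitstrings n. if g y then w (fst p) (snd p) y else 0)
       - (\<Sum>y\<in>bitstrings n. q y * w (fst p) (snd p) y)\<bar>}" for p
  have Mm_eq: "Mm n {y \<in> bitstrings n. g y} (s i) (s j) = (\<Sum>y\<in>bitstrings n. if g y then w i j y else 0)" for g i j
  proof -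
    have "{y \<in> bitstrings n. g y} \<inter> bitstrings n = {y \<in> bitstrings n. g y}" by auto
    then have "Mm n {y \<in> bitstrings n. g y} (s i) (s j) = 1 / 2 ^ n * (\<Sum>y\<in>{y \<in> bitstrings n. g y}. chi y (s i) * chi y (s j))"
      by (simp add: Mm_def[OF l0 sY G k0 k1])
    also have "\<dots> = (\<Sum>y\<in>{y \<in> bitstrings n. g y}. w i j y)" unfolding w_def by (simp add: sum_divide_distrib)
    also have "\<dots> = (\<Sum>y\<in>bitstrings n. if g y then w i j y else 0)" by (simp add: sum.inter_filter)
    finally show ?thesis .
  qed
  have Ee_eq: "Ee n l s \<kappa> (s i) (s j) = (\<Sum>y\<in>bitstrings n. q y * w i j y)" for i j
    by (simp add: Ee_def[OF l0 sY G k0 k1] w_def qpp sum_distrib_left sum_divide_distrib mult_ac)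
  have sub: "{g. (s ` {..<l}, {y \<in> bitstrings n. g y}) \<in> {(S, U). \<not> strong_yes_instance n t1 t2 v S U}}
      \<subseteq> (\<Union>p\<in>{..<l} \<times> {..<l}. Bad p)"
  proof
    fix g assume g: "g \<in> {g. (s ` {..<l}, {y \<in> bitstrings n. g y}) \<in> {(S, U). \<not> strong_yes_instance n t1 t2 v S U}}"
    show "g \<in> (\<Union>p\<in>{..<l} \<times> {..<l}. Bad p)"
    proof (rule ccontr)
      assume ng: "g \<notin> (\<Union>p\<in>{..<l} \<times> {..<l}. Bad p)"
      define U where "U = {y \<in> bitstrings n. g y}"
      have dev: "\<bar>Mm n U (s i) (s j) - Ee n l s \<kappa> (s i) (s j)\<bar> \<le> \<rho> / real l" if "i < l" "j < l" for i j
      proof -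
        have "g \<notin> Bad (i, j)" using ng that by auto
        then have "\<not> \<rho> / real l \<le> \<bar>(\<Sum>y\<in>bitstrings n. if g y then w i j y else 0) - (\<Sum>y\<in>bitstrings n. q y * w i j y)\<bar>"
          unfolding Bad_def fst_conv snd_conv by blast
        then show ?thesis unfolding U_def Mm_eq Ee_eq by linarith
      qed
      have lo: "t2 \<le> spec_forr n (s ` {..<l}) U"
        unfolding t2 by (rule lower[OF l0 sY G k0 k1 r0 dev])
      have up: "spec_forr n \<Delta> U \<le> t1" if "\<Delta> \<subseteq> s ` {..<l}" "card \<Delta> \<le> v" for \<Delta>
        unfolding t1 by (rule spec_le, rule upper[OF l0 sY G k0 k1 r0 dev vl that]) auto
      have "strong_yes_instance n t1 t2 v (s ` {..<l}) U"
        unfolding strong_yes_instance_def using lo up by blast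
      then show False using g unfolding U_def by simp
    qed
  qed
  have hb: "measure_pmf.prob PU (Bad p) \<le> 2 * exp (-2 * (\<rho> / real l)\<^sup>2 * 2 ^ n)" for p
  proof -
    have ws: "(\<Sum>y\<in>bitstrings n. (w (fst p) (snd p) y)\<^sup>2) = 1 / 2 ^ n"
    proof -
      have "(w (fst p) (snd p) y)\<^sup>2 = 1 / (2 ^ n * 2 ^ n)" for y
        unfolding w_def power2_eq_square
        by (simp add: field_simps)
      then show ?thesis by (simp add: card_bitstrings)
    qed
    have "measure_pmf.prob PU (Bad p) \<le> 2 * exp (-2 * (\<rho> / real l)\<^sup>2 / (\<Sum>y\<in>bitstrings n. (w (fst p) (snd p) y)\<^sup>2))"
      unfolding PU_def Bad_def
      by (rule hoeff_entry) (use q01 r0 ws in auto)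
    also have "-2 * (\<rho> / real l)\<^sup>2 / (\<Sum>y\<in>bitstrings n. (w (fst p) (snd p) y)\<^sup>2) = -2 * (\<rho> / real l)\<^sup>2 * 2 ^ n"
      unfolding ws by simp
    finally show ?thesis .
  qed
  have "measure_pmf.prob (PU \<bind> (\<lambda>g. return_pmf (s ` {..<l}, {y \<in> bitstrings n. g y})))
           {(S, U). \<not> strong_yes_instance n t1 t2 v S U}
      = measure_pmf.prob PU {g. (s ` {..<l}, {y \<in> bitstrings n. g y}) \<in> {(S, U). \<not> strong_yes_instance n t1 t2 v S U}}"
    by (simp add: map_pmf_def[symmetric] vimage_def)
  also have "\<dots> \<le> measure_pmf.prob PU (\<Union>p\<in>{..<l} \<times> {..<l}. Bad p)"
    by (rule measure_pmf.finite_measure_mono[OF sub]) simp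
  also have "\<dots> \<le> real (card ({..<l} \<times> {..<l})) * (2 * exp (-2 * (\<rho> / real l)\<^sup>2 * 2 ^ n))"
    by (rule prob_union_le) (simp, rule hb)
  also have "\<dots> = real l * real l * (2 * exp (-2 * (\<rho> / real l)\<^sup>2 * 2 ^ n))"
    by (simp add: card_cartesian_product)
  finally show ?thesis unfolding PU_def q_def .
qed


theorem mainTheorem7:
  fixes n l v :: nat and \<kappa> \<rho> t1 t2 :: real
  assumes "n > 0" "l > 0" "v > 0"
    and "0 \<le> \<kappa>" "\<kappa> \<le> 1" "\<rho> \<ge> 0"
    and "t1 = (1 + \<kappa>) / 2 + real v / real l + \<rho>"
    and "t2 = (1 + 3 * \<kappa>) / 2 - 15 * \<kappa>\<^sup>2 / 4 - 5 * \<kappa> / real l - \<rho>"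
    and "t1 < t2"
  shows "measure_pmf.prob (Strong n l \<kappa>)
           {(S, U). \<not> strong_yes_instance n t1 t2 v S U}
         \<le> real l ^ 6 * 2 powr (- real n)
           + 2 * (real l)\<^sup>2 * exp (- (\<rho>\<^sup>2 * 2 ^ n) / (2 * (real l)\<^sup>2))"
proof -
  have l0: "0 < l" and k0: "0 \<le> \<kappa>" and k1: "\<kappa> \<le> 1" and r0: "0 \<le> \<rho>"
    and t1: "t1 = (1 + \<kappa>) / 2 + real v / real l + \<rho>"
    and t2: "t2 = (1 + 3 * \<kappa>) / 2 - 15 * \<kappa>\<^sup>2 / 4 - 5 * \<kappa> / real l - \<rho>"
    using assms by auto
  have vl: "v \<le> l"
  proof -
    have sq: "(15/4) * (\<kappa> - 2/15)\<^sup>2 = 15 * \<kappa>\<^sup>2 / 4 - \<kappa> + 1/15"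
      by (simp add: power2_eq_square algebra_simps)
    have "0 \<le> (15/4) * (\<kappa> - 2/15)\<^sup>2" by simp
    moreover have "0 \<le> 5 * \<kappa> / real l" using k0 by simp
    ultimately have h: "\<kappa> - 15 * \<kappa>\<^sup>2 / 4 \<le> 1/15" "0 \<le> 5 * \<kappa> / real l" using sq by linarith+
    have "t1 < t2" by (rule assms(9))
    then have tt: "(1 + \<kappa>) / 2 + real v / real l + \<rho> < (1 + 3 * \<kappa>) / 2 - 15 * \<kappa>\<^sup>2 / 4 - 5 * \<kappa> / real l - \<rho>"
      unfolding t1 t2 .
    have aux: "\<And>a b c d e :: real. (1 + a) / 2 + b + e < (1 + 3 * a) / 2 - c - d - e \<Longrightarrow> a - c \<le> 1/15
        \<Longrightarrow> 0 \<le> d \<Longrightarrow> 0 \<le> e \<Longrightarrow> b < 1" by (simp add: field_simps)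
    have "real v / real l < 1" by (rule aux[OF tt h r0])
    then have "real v < real l" using l0 by (simp add: divide_less_eq)
    then show ?thesis by simp
  qed
  define \<beta> where "\<beta> = real l * real l * (2 * exp (-2 * (\<rho> / real l)\<^sup>2 * 2 ^ n))"
  have St: "Strong n l \<kappa> = PS n l \<bind> (\<lambda>s. Pi_pmf (bitstrings n) False (\<lambda>y. bernoulli_pmf (1 - exp (- \<kappa> * gamma l s y) / 2))
           \<bind> (\<lambda>g. return_pmf (s ` {..<l}, {y \<in> bitstrings n. g y})))"
    unfolding Strong_def PS_def ..
  have "measure_pmf.prob (Strong n l \<kappa>) {(S, U). \<not> strong_yes_instance n t1 t2 v S U}
      \<le> measure_pmf.prob (PS n l) {s. \<not> Gen n l s} + \<beta>"
    unfolding St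
  proof (rule prob_bind_le)
    fix s assume s: "s \<in> set_pmf (PS n l)" "s \<notin> {s. \<not> Gen n l s}"
    have sY: "\<And>i. i < l \<Longrightarrow> s i \<in> bitstrings n" using set_PS[OF s(1)] .
    have G: "Gen n l s" using s(2) by simp
    show "measure_pmf.prob (Pi_pmf (bitstrings n) False (\<lambda>y. bernoulli_pmf (1 - exp (- \<kappa> * gamma l s y) / 2))
           \<bind> (\<lambda>g. return_pmf (s ` {..<l}, {y \<in> bitstrings n. g y})))
           {(S, U). \<not> strong_yes_instance n t1 t2 v S U} \<le> \<beta>"
      unfolding \<beta>_def by (rule inner_bound[OF l0 sY G k0 k1 r0 vl t1 t2])
  qed (simp add: \<beta>_def)
  also have "\<dots> \<le> real l ^ 6 / 2 ^ n + \<beta>" using prob_not_Gen[of n l] by simp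
  also have "\<dots> \<le> real l ^ 6 * 2 powr (- real n) + 2 * (real l)\<^sup>2 * exp (- (\<rho>\<^sup>2 * 2 ^ n) / (2 * (real l)\<^sup>2))"
  proof -
    have a: "real l ^ 6 / 2 ^ n = real l ^ 6 * 2 powr (- real n)"
      by (simp add: powr_minus powr_realpow divide_inverse)
    have "-2 * (\<rho> / real l)\<^sup>2 * 2 ^ n \<le> - (\<rho>\<^sup>2 * 2 ^ n) / (2 * (real l)\<^sup>2)"
    proof -
      have e: "-2 * (\<rho> / real l)\<^sup>2 * 2 ^ n = - 4 * ((\<rho>\<^sup>2 * 2 ^ n) / (2 * (real l)\<^sup>2))"
        using l0 by (simp add: power_divide field_simps)
      have e2: "- (\<rho>\<^sup>2 * 2 ^ n) / (2 * (real l)\<^sup>2) = - ((\<rho>\<^sup>2 * 2 ^ n) / (2 * (real l)\<^sup>2))" by simp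
      have "0 \<le> (\<rho>\<^sup>2 * 2 ^ n) / (2 * (real l)\<^sup>2)" by simp
      then show ?thesis unfolding e e2 by linarith
    qed
    then have "exp (-2 * (\<rho> / real l)\<^sup>2 * 2 ^ n) \<le> exp (- (\<rho>\<^sup>2 * 2 ^ n) / (2 * (real l)\<^sup>2))" by simp
    then have "real l * real l * (2 * exp (-2 * (\<rho> / real l)\<^sup>2 * 2 ^ n)) \<le>
        real l * real l * (2 * exp (- (\<rho>\<^sup>2 * 2 ^ n) / (2 * (real l)\<^sup>2)))"
      by (intro mult_left_mono) auto
    moreover have "real l * real l * (2 * exp (- (\<rho>\<^sup>2 * 2 ^ n) / (2 * (real l)\<^sup>2))) =
        2 * (real l)\<^sup>2 * exp (- (\<rho>\<^sup>2 * 2 ^ n) / (2 * (real l)\<^sup>2))"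
      by (simp only: power2_eq_square mult_ac)
    ultimately have "\<beta> \<le> 2 * (real l)\<^sup>2 * exp (- (\<rho>\<^sup>2 * 2 ^ n) / (2 * (real l)\<^sup>2))"
      unfolding \<beta>_def by linarith
    then show ?thesis using a by simp
  qed
  finally show ?thesis .
qed

end
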